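(* Let $K\subseteq\mathbb{R}$ be a cubic number field having exactly one real embedding (i.e. $K$ has one real and two complex conjugate embeddings into $\mathbb{C}$), and let $\alpha,\beta\in K$. Then there exists a Peck sequence for the pair $(\alpha,\beta)$.
   Context: For $x\in\mathbb{R}$, $\|x\|$ denotes the distance from $x$ to the nearest integer. A Peck sequence for a pair $(\sigma,\tau)$ of real numbers is a strictly increasing sequence $(s_n)_{n\ge1}$ of positive integers for which there exist constants $M_1,M_2>0$ and an infinite subsequence $(\psi_n)_{n\ge1}$ of $(s_n)$ with all $\psi_n\ge 2$, such that for all $n$: $\max\{\|s_n\sigma\|,\|s_n\tau\|\}<\frac{M_1}{s_n^{1/2}}$ and $\|\psi_n\sigma\|<\frac{M_2}{\psi_n^{1/2}\log\psi_n}$. *)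

theory Defs
  imports Complex_Main
begin

definition dist_int :: "real \<Rightarrow> real" where
  "dist_int x = \<bar>x - of_int (round x)\<bar>"

definition real_subfield :: "real set \<Rightarrow> bool" where
  "real_subfield K \<longleftrightarrow> 0 \<in> K \<and> 1 \<in> K \<and>
     (\<forall>x\<in>K. \<forall>y\<in>K. x + y \<in> K \<and> x * y \<in> K) \<and>
     (\<forall>x\<in>K. - x \<in> K \<and> inverse x \<in> K)"

definition cubic_number_field :: "real set \<Rightarrow> bool" where
  "cubic_number_field K \<longleftrightarrow> real_subfield K \<and>
     (\<exists>b :: nat \<Rightarrow> real. (\<forall>i<3. b i \<in> K) \<and>
        (\<forall>q. (\<forall>i<3. q i \<in> \<rat>) \<and> (\<Sum>i<3. q i * b i) = 0 \<longrightarrow> (\<forall>i<3. q i = 0)) \<and>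
        (\<forall>x\<in>K. \<exists>q. (\<forall>i<3. q i \<in> \<rat>) \<and> x = (\<Sum>i<3. q i * b i)))"

definition complex_embeddings :: "real set \<Rightarrow> (real \<Rightarrow> complex) set" where
  "complex_embeddings K = {\<sigma>. \<sigma> 1 = 1 \<and>
     (\<forall>x\<in>K. \<forall>y\<in>K. \<sigma> (x + y) = \<sigma> x + \<sigma> y \<and> \<sigma> (x * y) = \<sigma> x * \<sigma> y) \<and>
     (\<forall>x. x \<notin> K \<longrightarrow> \<sigma> x = 0)}"

definition real_embeddings :: "real set \<Rightarrow> (real \<Rightarrow> complex) set" where
  "real_embeddings K = {\<sigma> \<in> complex_embeddings K. \<forall>x\<in>K. \<sigma> x \<in> \<real>}"

text \<open>Peck sequence (indexed from 0 instead of 1).\<close>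
definition peck_sequence :: "(nat \<Rightarrow> nat) \<Rightarrow> real \<Rightarrow> real \<Rightarrow> bool" where
  "peck_sequence s \<sigma> \<tau> \<longleftrightarrow> strict_mono s \<and> (\<forall>n. s n > 0) \<and>
     (\<exists>M1 M2 :: real. M1 > 0 \<and> M2 > 0 \<and>
       (\<exists>r :: nat \<Rightarrow> nat. strict_mono r \<and> (\<forall>n. s (r n) \<ge> 2) \<and>
         (\<forall>n. max (dist_int (real (s n) * \<sigma>)) (dist_int (real (s n) * \<tau>))
                 < M1 / sqrt (real (s n))) \<and>
         (\<forall>n. dist_int (real (s (r n)) * \<sigma>)
                 < M2 / (sqrt (real (s (r n))) * ln (real (s (r n)))))))"

end

theory Submission
  imports Defs "HOL-Analysis.Kronecker_Approximation_Theorem" "HOL-Library.Infinite_Set"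
begin

interpretation QV: vector_space "\<lambda>(q::rat) (x::real). of_rat q * x"
  by unfold_locales (auto simp: algebra_simps of_rat_add of_rat_mult)

lemma dep_gen:
  fixes v :: "nat \<Rightarrow> real" and T :: "real set"
  assumes "finite T" "card T < m" "\<And>i. i < m \<Longrightarrow> v i \<in> QV.span T"
  shows "\<exists>c::nat \<Rightarrow> rat. (\<exists>i<m. c i \<noteq> 0) \<and> (\<Sum>i<m. of_rat (c i) * v i) = 0"
proof (cases "inj_on v {..<m}")
  case False
  then obtain i j where ij: "i < m" "j < m" "i \<noteq> j" "v i = v j"
    unfolding inj_on_def by auto
  define c where "c = (\<lambda>k. if k = i then (1::rat) else if k = j then -1 else 0)"
  have "(\<Sum>k<m. of_rat (c k) * v k) = (\<Sum>k\<in>{i,j}. of_rat (c k) * v k)"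
    by (rule sum.mono_neutral_right) (use ij in \<open>auto simp: c_def\<close>)
  also have "\<dots> = 0" using ij by (simp add: c_def)
  finally show ?thesis using ij by (intro exI[of _ c]) (auto simp: c_def)
next
  case True
  define S where "S = v ` {..<m}"
  have cS: "card S = m" using True by (simp add: S_def card_image)
  have "S \<subseteq> QV.span T" using assms(3) by (auto simp: S_def)
  have "QV.dependent S"
  proof (rule ccontr)
    assume "\<not> QV.dependent S"
    from QV.independent_span_bound[OF assms(1) this \<open>S \<subseteq> QV.span T\<close>]
    show False using cS assms(2) by simp
  qed
  then obtain u where u: "\<exists>s\<in>S. u s \<noteq> 0" "(\<Sum>s\<in>S. of_rat (u s) * s) = 0"
    using QV.dependent_finite[of S] by (auto simp: S_def)
  have "(\<Sum>i<m. of_rat (u (v i)) * v i) = (\<Sum>s\<in>S. of_rat (u s) * s)"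
    unfolding S_def by (subst sum.reindex[OF True]) simp
  then show ?thesis using u by (intro exI[of _ "\<lambda>i. u (v i)"]) (auto simp: S_def)
qed

lemma rat_in_subfield:
  assumes "real_subfield K" "x \<in> \<rat>"
  shows "x \<in> K"
proof -
  have int: "of_int n \<in> K" for n
  proof (induction n rule: int_induct[where k=0])
    case base then show ?case using assms by (simp add: real_subfield_def)
  next
    case (step1 i)
    then show ?case using assms unfolding real_subfield_def by (simp add: add.commute)
  next
    case (step2 i)
    have "- (1::real) \<in> K" using assms by (simp add: real_subfield_def)
    then have "of_int i + - 1 \<in> K" using step2 assms unfolding real_subfield_def by blast
    then show ?case by simp
  qed
  from assms(2) obtain a b where ab: "x = of_int a / of_int b" "b \<noteq> 0"
    by (auto elim!: Rats_cases')
  have "inverse (of_int b) \<in> K" using int assms by (simp add: real_subfield_def)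
  then have "of_int a * inverse (of_int b) \<in> K" using int assms by (simp add: real_subfield_def)
  then show ?thesis using ab by (simp add: divide_inverse)
qed

lemma Rats_of_rat_ex: "x \<in> \<rat> \<Longrightarrow> \<exists>r. x = of_rat r"
  by (auto simp: Rats_def)

locale cubicK =
  fixes K :: "real set" and b :: "nat \<Rightarrow> real"
  assumes sub: "real_subfield K"
    and bK: "\<And>i. i < 3 \<Longrightarrow> b i \<in> K"
    and bind: "\<And>q. (\<forall>i<3. q i \<in> \<rat>) \<Longrightarrow> (\<Sum>i<3. q i * b i) = 0 \<Longrightarrow> (\<forall>i<3. q i = 0)"
    and bspan: "\<And>x. x \<in> K \<Longrightarrow> \<exists>q. (\<forall>i<3. q i \<in> \<rat>) \<and> x = (\<Sum>i<3. q i * b i)"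
begin

lemma K_add: "x \<in> K \<Longrightarrow> y \<in> K \<Longrightarrow> x + y \<in> K"
  and K_mult: "x \<in> K \<Longrightarrow> y \<in> K \<Longrightarrow> x * y \<in> K"
  and K_uminus: "x \<in> K \<Longrightarrow> - x \<in> K"
  and K_inverse: "x \<in> K \<Longrightarrow> inverse x \<in> K"
  using sub by (auto simp: real_subfield_def)

lemma K_diff: "x \<in> K \<Longrightarrow> y \<in> K \<Longrightarrow> x - y \<in> K"
  using K_add[of x "-y"] K_uminus[of y] by simp

lemma K_divide: "x \<in> K \<Longrightarrow> y \<in> K \<Longrightarrow> x / y \<in> K"
  using K_mult[of x "inverse y"] K_inverse[of y] by (simp add: divide_inverse)

lemma K_rat: "x \<in> \<rat> \<Longrightarrow> x \<in> K"
  using rat_in_subfield[OF sub] .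

lemma K_power: "x \<in> K \<Longrightarrow> x ^ n \<in> K"
proof (induction n)
  case 0 then show ?case using K_rat[of 1] by simp
next
  case (Suc n) then show ?case using K_mult[of x "x^n"] by simp
qed

lemma K_span: "x \<in> K \<Longrightarrow> x \<in> QV.span (b ` {..<3})"
proof -
  assume "x \<in> K"
  then obtain q where q: "\<forall>i<3. q i \<in> \<rat>" "x = (\<Sum>i<3. q i * b i)" using bspan by blast
  define r where "r i = (SOME r. q i = of_rat r)" for i
  have r: "q i = of_rat (r i)" if "i < 3" for i
  proof -
    from q(1) that have "\<exists>r. q i = of_rat r" by (simp add: Rats_of_rat_ex)
    then show ?thesis unfolding r_def by (rule someI_ex)
  qed
  have "x = (\<Sum>i<3. of_rat (r i) * b i)" using q(2) r by simp
  also have "\<dots> \<in> QV.span (b ` {..<3})"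
    by (intro QV.span_sum QV.span_scale QV.span_base) auto
  finally show ?thesis .
qed

lemma four_dep:
  fixes v :: "nat \<Rightarrow> real"
  assumes "\<And>i. i < 4 \<Longrightarrow> v i \<in> K"
  shows "\<exists>c::nat\<Rightarrow>real. (\<forall>i<4. c i \<in> \<rat>) \<and> (\<exists>i<4. c i \<noteq> 0) \<and> (\<Sum>i<4. c i * v i) = 0"
proof -
  have "card (b ` {..<3}) \<le> 3" by (metis card_image_le card_lessThan finite_lessThan)
  then have "\<exists>c::nat\<Rightarrow>rat. (\<exists>i<4. c i \<noteq> 0) \<and> (\<Sum>i<4. of_rat (c i) * v i) = 0"
    by (intro dep_gen[of "b ` {..<3}"]) (auto intro: K_span assms)
  then obtain c where c: "\<exists>i<4. c i \<noteq> 0" "(\<Sum>i<4. of_rat (c i) * v i) = 0"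
    by blast
  then show ?thesis by (intro exI[of _ "\<lambda>i. of_rat (c i)"]) auto
qed

lemma not_span_two:
  assumes "\<And>y. y \<in> K \<Longrightarrow> \<exists>r s. r \<in> \<rat> \<and> s \<in> \<rat> \<and> y = r + s * x"
  shows False
proof -
  have sp: "b i \<in> QV.span {1, x}" if i3: "i < 3" for i
  proof -
    obtain r s where rs: "r \<in> \<rat>" "s \<in> \<rat>" "b i = r + s * x" using assms[OF bK[OF i3]] by auto
    obtain r' where r': "r = of_rat r'" using rs(1) Rats_of_rat_ex by auto
    obtain s' where s': "s = of_rat s'" using rs(2) Rats_of_rat_ex by auto
    have "b i = of_rat r' * 1 + of_rat s' * x" using rs(3) r' s' by simp
    also have "\<dots> \<in> QV.span {1, x}"
      by (intro QV.span_add QV.span_scale QV.span_base) auto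
    finally show ?thesis .
  qed
  have "card {1, x} < (3::nat)" by (simp add: card_insert_if)
  then have "\<exists>c::nat\<Rightarrow>rat. (\<exists>i<3. c i \<noteq> 0) \<and> (\<Sum>i<3. of_rat (c i) * b i) = 0"
    by (intro dep_gen[of "{1,x}"]) (auto intro: sp)
  then obtain c where c: "\<exists>i<3. c i \<noteq> 0" "(\<Sum>i<3. of_rat (c i) * b i) = 0"
    by blast
  have "\<forall>i<3. of_rat (c i) = (0::real)"
    by (rule bind) (use c(2) in simp_all)
  then show False using c by auto
qed

lemma exists_irr: "\<exists>t\<in>K. t \<notin> \<rat>"
proof (rule ccontr)
  assume "\<not> ?thesis"
  then have "\<And>y. y \<in> K \<Longrightarrow> \<exists>r s. r \<in> \<rat> \<and> s \<in> \<rat> \<and> y = r + s * 0" by auto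
  then show False by (rule not_span_two)
qed


lemma sum4: "(\<Sum>i<(4::nat). f i) = f 0 + f 1 + f 2 + (f 3 :: real)"
  by (simp add: numeral_eq_Suc lessThan_Suc)

lemma lt4: "(i::nat) < 4 \<longleftrightarrow> i = 0 \<or> i = 1 \<or> i = 2 \<or> i = 3"
  by arith

lemma ex4: "(\<exists>i<(4::nat). P i) \<longleftrightarrow> P 0 \<or> P 1 \<or> P 2 \<or> P 3"
  unfolding lt4 by blast

lemma all4: "(\<forall>i<(4::nat). P i) \<longleftrightarrow> P 0 \<and> P 1 \<and> P 2 \<and> P 3"
  unfolding lt4 by blast

lemma four_dep':
  assumes "v0 \<in> K" "v1 \<in> K" "v2 \<in> K" "v3 \<in> K"
  obtains c0 c1 c2 c3 where "c0 \<in> \<rat>" "c1 \<in> \<rat>" "c2 \<in> \<rat>" "c3 \<in> \<rat>"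
    "c0 \<noteq> 0 \<or> c1 \<noteq> 0 \<or> c2 \<noteq> 0 \<or> c3 \<noteq> 0" "c0 * v0 + c1 * v1 + c2 * v2 + c3 * v3 = 0"
proof -
  define v where "v = (\<lambda>i::nat. if i = 0 then v0 else if i = 1 then v1 else if i = 2 then v2 else v3)"
  have "\<And>i. i < 4 \<Longrightarrow> v i \<in> K" using assms by (auto simp: v_def)
  from four_dep[OF this] obtain c :: "nat \<Rightarrow> real" where
      c0: "(\<forall>i<4. c i \<in> \<rat>) \<and> (\<exists>i<4. c i \<noteq> 0) \<and> (\<Sum>i<4. c i * v i) = 0" ..
  note c = conjunct1[OF c0] conjunct1[OF conjunct2[OF c0]] conjunct2[OF conjunct2[OF c0]]
  have 1: "c 0 \<in> \<rat>" "c 1 \<in> \<rat>" "c 2 \<in> \<rat>" "c 3 \<in> \<rat>" using c(1) unfolding all4 by auto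
  have 2: "c 0 \<noteq> 0 \<or> c 1 \<noteq> 0 \<or> c 2 \<noteq> 0 \<or> c 3 \<noteq> 0" using c(2) unfolding ex4 .
  have 3: "c 0 * v0 + c 1 * v1 + c 2 * v2 + c 3 * v3 = 0" using c(3) unfolding sum4 by (simp add: v_def)
  show ?thesis using 1 2 3 by (rule that)
qed

lemma irr_lin: "x \<notin> \<rat> \<Longrightarrow> u \<in> \<rat> \<Longrightarrow> v \<in> \<rat> \<Longrightarrow> u + v * x = 0 \<Longrightarrow> u = 0 \<and> v = 0"
proof -
  assume h: "x \<notin> \<rat>" "u \<in> \<rat>" "v \<in> \<rat>" "u + v * x = 0"
  show ?thesis
  proof (cases "v = 0")
    case True then show ?thesis using h by simp
  next
    case False
    then have "x = - u / v" using h(4) by (simp add: field_simps add_eq_0_iff)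
    then have "x \<in> \<rat>" using h by simp
    then show ?thesis using h by simp
  qed
qed

lemma indep_pow:
  assumes x: "x \<in> K" "x \<notin> \<rat>" and abc: "u \<in> \<rat>" "v \<in> \<rat>" "w \<in> \<rat>"
    and eq: "u + v * x + w * x^2 = 0"
  shows "u = 0 \<and> v = 0 \<and> w = 0"
proof (rule ccontr)
  assume nz: "\<not> (u = 0 \<and> v = 0 \<and> w = 0)"
  have w0: "w \<noteq> 0"
  proof
    assume "w = 0"
    then have "u + v * x = 0" using eq by simp
    then show False using irr_lin[OF x(2) abc(1,2)] nz \<open>w = 0\<close> by simp
  qed
  define p where "p = - v / w"
  define q where "q = - u / w"
  have x2: "x^2 = p * x + q" using eq w0 unfolding p_def q_def
    by (simp add: field_simps)
  have pq: "p \<in> \<rat>" "q \<in> \<rat>" using abc by (simp_all add: p_def q_def)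
  obtain y where y: "y \<in> K" "\<not> (\<exists>r s. r \<in> \<rat> \<and> s \<in> \<rat> \<and> y = r + s * x)"
    using not_span_two[of x] by metis
  obtain c0 c1 c2 c3 where c: "c0 \<in> \<rat>" "c1 \<in> \<rat>" "c2 \<in> \<rat>" "c3 \<in> \<rat>"
    "c0 \<noteq> 0 \<or> c1 \<noteq> 0 \<or> c2 \<noteq> 0 \<or> c3 \<noteq> 0" "c0 * 1 + c1 * x + c2 * y + c3 * (x * y) = 0"
    by (rule four_dep'[OF K_rat[OF Rats_1] x(1) y(1) K_mult[OF x(1) y(1)]])
  define d where "d = c2 + c3 * x"
  show False
  proof (cases "d = 0")
    case True
    have "c2 = 0 \<and> c3 = 0" using irr_lin[OF x(2) c(3,4)] True d_def by simp
    moreover then have "c0 + c1 * x = 0" using c(6) by simp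
    ultimately show False using irr_lin[OF x(2) c(1,2)] c(5) by simp
  next
    case False
    define e where "e = c2 + c3 * p - c3 * x"
    define n where "n = c2^2 + c2 * c3 * p - c3^2 * q"
    have de: "d * e = n" unfolding d_def e_def n_def
      by (simp add: algebra_simps power2_eq_square) (use x2 in \<open>simp add: power2_eq_square algebra_simps\<close>)
    have e0: "e \<noteq> 0"
    proof
      assume "e = 0"
      then have "(c2 + c3 * p) + (- c3) * x = 0" by (simp add: e_def)
      moreover have "c2 + c3 * p \<in> \<rat>" "- c3 \<in> \<rat>" using c pq by auto
      ultimately have "c2 + c3 * p = 0 \<and> - c3 = 0" using irr_lin[OF x(2)] by blast
      then have "c3 = 0 \<and> c2 = 0" by auto
      then show False using False d_def by simp
    qed
    have n0: "n \<noteq> 0" using de e0 False by auto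
    have yd: "y = - (c0 + c1 * x) / d" using c(6) False unfolding d_def
      by (simp add: field_simps)
    also have "\<dots> = - (c0 + c1 * x) * e / n" unfolding de[symmetric] using e0 False by simp
    finally have yn: "y = - ((c0 + c1 * x) * e) / n" by (simp add: algebra_simps)
    have expand: "(c0 + c1 * x) * e = (c0 * (c2 + c3 * p) - c1 * c3 * q) + (c1 * (c2 + c3 * p) - c0 * c3 - c1 * c3 * p) * x"
      unfolding e_def using x2 by (simp add: algebra_simps power2_eq_square)
    have "y = (- (c0 * (c2 + c3 * p) - c1 * c3 * q) / n) + (- (c1 * (c2 + c3 * p) - c0 * c3 - c1 * c3 * p) / n) * x"
      unfolding yn expand using n0 by (simp add: field_simps)
    moreover have "n \<in> \<rat>" using c pq by (simp add: n_def)
    ultimately show False using y(2) c pq by (metis Rats_add Rats_diff Rats_divide Rats_minus_iff Rats_mult)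
  qed
qed

lemma span_pow:
  assumes x: "x \<in> K" "x \<notin> \<rat>" and y: "y \<in> K"
  shows "\<exists>u v w. u \<in> \<rat> \<and> v \<in> \<rat> \<and> w \<in> \<rat> \<and> y = u + v * x + w * x^2"
proof -
  obtain c0 c1 c2 c3 where c: "c0 \<in> \<rat>" "c1 \<in> \<rat>" "c2 \<in> \<rat>" "c3 \<in> \<rat>"
    "c0 \<noteq> 0 \<or> c1 \<noteq> 0 \<or> c2 \<noteq> 0 \<or> c3 \<noteq> 0" "c0 * 1 + c1 * x + c2 * x^2 + c3 * y = 0"
    by (rule four_dep'[OF K_rat[OF Rats_1] x(1) K_power[OF x(1)] y])
  have c3: "c3 \<noteq> 0"
  proof
    assume "c3 = 0"
    then have "c0 + c1 * x + c2 * x^2 = 0" using c(6) by simp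
    then show False using indep_pow[OF x c(1,2,3)] c(5) \<open>c3 = 0\<close> by simp
  qed
  have "c3 * y = - c0 - c1 * x - c2 * x^2" using c(6) by linarith
  then have "y = (- c0 - c1 * x - c2 * x^2) / c3" using c3 by (simp add: eq_divide_eq mult.commute)
  also have "\<dots> = (- c0 / c3) + (- c1 / c3) * x + (- c2 / c3) * x^2"
    by (simp add: diff_divide_distrib)
  finally have "y = (- c0 / c3) + (- c1 / c3) * x + (- c2 / c3) * x^2" .
  then show ?thesis using c by (intro exI[of _ "- c0 / c3"] exI[of _ "- c1 / c3"] exI[of _ "- c2 / c3"]) simp
qed

end

lemma prod_red:
  fixes t A B C u v w u2 v2 w2 :: "'a::comm_ring_1"
  assumes "t^3 = A * t^2 + B * t + C"
  shows "(u + v * t + w * t^2) * (u2 + v2 * t + w2 * t^2) =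
    (u * u2 + C * (v * w2+w * v2) + A * C * (w * w2)) + (u * v2+v * u2 + B * (v * w2+w * v2) + (A * B+C) * (w * w2)) * t
    + (u * w2+v * v2+w * u2 + A * (v * w2+w * v2) + (A^2+B) * (w * w2)) * t^2"
proof -
  have t4: "t^4 = (A^2+B) * t^2 + (A * B+C) * t + A * C"
  proof -
    have "t^4 = t * t^3" by (simp add: power_numeral_reduce)
    also have "\<dots> = A * t^3 + B * t^2 + C * t" using assms by (simp add: algebra_simps power2_eq_square power3_eq_cube)
    also have "\<dots> = (A^2+B) * t^2 + (A * B+C) * t + A * C" using assms by (simp add: algebra_simps power2_eq_square)
    finally show ?thesis .
  qed
  have "(u + v * t + w * t^2) * (u2 + v2 * t + w2 * t^2) =
     u * u2 + (u * v2+v * u2) * t + (u * w2+v * v2+w * u2) * t^2 + (v * w2+w * v2) * t^3 + (w * w2) * t^4"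
    by (simp add: algebra_simps power2_eq_square power3_eq_cube power_numeral_reduce)
  also have "\<dots> = (u * u2 + C * (v * w2+w * v2) + A * C * (w * w2)) + (u * v2+v * u2 + B * (v * w2+w * v2) + (A * B+C) * (w * w2)) * t
    + (u * w2+v * v2+w * u2 + A * (v * w2+w * v2) + (A^2+B) * (w * w2)) * t^2"
    unfolding t4 assms by (simp add: algebra_simps)
  finally show ?thesis .
qed

context cubicK
begin

lemma rat_den: "x \<in> \<rat> \<Longrightarrow> \<exists>d m. d > (0::int) \<and> x = of_int m / of_int d"
  by (erule Rats_cases') auto

lemma exists_int_gen:
  "\<exists>t A B C. t \<in> K \<and> t \<notin> \<rat> \<and> t^3 = of_int A * t^2 + of_int B * t + of_int C"
proof -
  obtain t where t: "t \<in> K" "t \<notin> \<rat>" using exists_irr by blast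
  obtain u v w where uvw: "u \<in> \<rat>" "v \<in> \<rat>" "w \<in> \<rat>" "t^3 = u + v * t + w * t^2"
    using span_pow[OF t K_power[OF t(1)]] by blast
  obtain du mu where u: "du > 0" "u = of_int mu / of_int du" using rat_den[OF uvw(1)] by blast
  obtain dv mv where v: "dv > 0" "v = of_int mv / of_int dv" using rat_den[OF uvw(2)] by blast
  obtain dw mw where w: "dw > 0" "w = of_int mw / of_int dw" using rat_den[OF uvw(3)] by blast
  define D where "D = du * dv * dw"
  have D0: "D > 0" using u v w by (simp add: D_def)
  define th where "th = of_int D * t"
  have "th \<in> K" unfolding th_def by (intro K_mult K_rat t) simp
  moreover have "th \<notin> \<rat>"
  proof
    assume "th \<in> \<rat>"
    then have "th / of_int D \<in> \<rat>" by simp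
    then show False using t D0 by (simp add: th_def)
  qed
  moreover have "th^3 = of_int (du*dv*mw) * th^2 + of_int (D*du*dw*mv) * th + of_int (D^2*dv*dw*mu)"
  proof -
    have "th^3 = of_int D ^ 3 * t^3" by (simp add: th_def power_mult_distrib)
    also have "\<dots> = of_int D^3 * u + of_int D^3 * v * t + of_int D^3 * w * t^2"
      by (simp add: uvw(4) algebra_simps)
    also have "\<dots> = of_int (du*dv*mw) * th^2 + of_int (D*du*dw*mv) * th + of_int (D^2*dv*dw*mu)"
      using u(1) v(1) w(1) unfolding th_def D_def u(2) v(2) w(2) by (simp add: field_simps power2_eq_square power3_eq_cube)
    finally show ?thesis .
  qed
  ultimately show ?thesis by blast
qed

end

locale cubicG = cubicK +
  fixes th :: real and A B C :: int
  assumes thK: "th \<in> K" and thQ: "th \<notin> \<rat>"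
    and threl: "th^3 = of_int A * th^2 + of_int B * th + of_int C"
    and single: "card (real_embeddings K) = 1"
begin

definition crd :: "real \<Rightarrow> real \<times> real \<times> real" where
  "crd x = (SOME (u,v,w). u \<in> \<rat> \<and> v \<in> \<rat> \<and> w \<in> \<rat> \<and> x = u + v * th + w * th^2)"

definition emb :: "complex \<Rightarrow> real \<Rightarrow> complex" where
  "emb z x = (if x \<in> K then (case crd x of (u,v,w) \<Rightarrow> of_real u + of_real v * z + of_real w * z^2) else 0)"

lemma rep_K: "u \<in> \<rat> \<Longrightarrow> v \<in> \<rat> \<Longrightarrow> w \<in> \<rat> \<Longrightarrow> u + v * th + w * th^2 \<in> K"
  by (intro K_add K_mult K_rat K_power thK)

lemma rep_unique:
  assumes "u \<in> \<rat>" "v \<in> \<rat>" "w \<in> \<rat>" "u2 \<in> \<rat>" "v2 \<in> \<rat>" "w2 \<in> \<rat>"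
    and "u + v * th + w * th^2 = u2 + v2 * th + w2 * th^2"
  shows "u = u2 \<and> v = v2 \<and> w = w2"
proof -
  have "(u - u2) + (v - v2) * th + (w - w2) * th^2 = 0" using assms(7) by (simp add: algebra_simps)
  from indep_pow[OF thK thQ _ _ _ this] assms(1-6) show ?thesis by simp
qed

lemma rep_exists: "x \<in> K \<Longrightarrow> \<exists>u v w. u \<in> \<rat> \<and> v \<in> \<rat> \<and> w \<in> \<rat> \<and> x = u + v * th + w * th^2"
  using span_pow[OF thK thQ] by blast

lemma crd_rep:
  assumes "u \<in> \<rat>" "v \<in> \<rat>" "w \<in> \<rat>"
  shows "crd (u + v * th + w * th^2) = (u, v, w)"
proof -
  let ?P = "\<lambda>(u2,v2,w2). u2 \<in> \<rat> \<and> v2 \<in> \<rat> \<and> w2 \<in> \<rat> \<and> u + v * th + w * th^2 = u2 + v2 * th + w2 * th^2"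
  have "?P (u,v,w)" using assms by simp
  then have "?P (crd (u + v * th + w * th^2))" unfolding crd_def by (rule someI)
  then obtain u2 v2 w2 where c: "crd (u + v * th + w * th^2) = (u2,v2,w2)" and "?P (u2,v2,w2)"
    by (cases "crd (u + v * th + w * th^2)") auto
  then have "u2 \<in> \<rat>" "v2 \<in> \<rat>" "w2 \<in> \<rat>" "u + v * th + w * th^2 = u2 + v2 * th + w2 * th^2" by auto
  from rep_unique[OF assms this] c show ?thesis by simp
qed

lemma emb_rep:
  assumes "u \<in> \<rat>" "v \<in> \<rat>" "w \<in> \<rat>"
  shows "emb z (u + v * th + w * th^2) = of_real u + of_real v * z + of_real w * z^2"
  using rep_K[OF assms] crd_rep[OF assms] by (simp add: emb_def)

definition good :: "complex \<Rightarrow> bool" where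
  "good z \<longleftrightarrow> z^3 = of_int A * z^2 + of_int B * z + of_int C"

lemma emb_mult:
  assumes z: "good z" and x: "x \<in> K" and y: "y \<in> K"
  shows "emb z (x * y) = emb z x * emb z y"
proof -
  obtain u v w where a: "u \<in> \<rat>" "v \<in> \<rat>" "w \<in> \<rat>" "x = u + v * th + w * th^2"
    using rep_exists[OF x] by blast
  obtain u2 v2 w2 where b: "u2 \<in> \<rat>" "v2 \<in> \<rat>" "w2 \<in> \<rat>" "y = u2 + v2 * th + w2 * th^2"
    using rep_exists[OF y] by blast
  let ?P0 = "u * u2 + of_int C * (v * w2 + w * v2) + of_int A * of_int C * (w * w2)"
  let ?P1 = "u * v2 + v * u2 + of_int B * (v * w2 + w * v2) + (of_int A * of_int B + of_int C) * (w * w2)"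
  let ?P2 = "u * w2 + v * v2 + w * u2 + of_int A * (v * w2 + w * v2) + ((of_int A)^2 + of_int B) * (w * w2)"
  have xy: "x * y = ?P0 + ?P1 * th + ?P2 * th^2"
    unfolding a(4) b(4) by (rule prod_red[OF threl])
  have P: "?P0 \<in> \<rat>" "?P1 \<in> \<rat>" "?P2 \<in> \<rat>" using a b by simp_all
  have zr: "z^3 = complex_of_real (of_int A) * z^2 + complex_of_real (of_int B) * z + complex_of_real (of_int C)"
    using z by (simp add: good_def)
  have "emb z (x * y) = of_real ?P0 + of_real ?P1 * z + of_real ?P2 * z^2"
    unfolding xy by (rule emb_rep[OF P])
  also have "\<dots> = (of_real u + of_real v * z + of_real w * z^2) * (of_real u2 + of_real v2 * z + of_real w2 * z^2)"
    using prod_red[OF zr, of "of_real u" "of_real v" "of_real w" "of_real u2" "of_real v2" "of_real w2"]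
    by simp
  also have "\<dots> = emb z x * emb z y" using a b by (simp add: emb_rep)
  finally show ?thesis .
qed

lemma emb_add:
  assumes x: "x \<in> K" and y: "y \<in> K"
  shows "emb z (x + y) = emb z x + emb z y"
proof -
  obtain u v w where a: "u \<in> \<rat>" "v \<in> \<rat>" "w \<in> \<rat>" "x = u + v * th + w * th^2"
    using rep_exists[OF x] by blast
  obtain u2 v2 w2 where b: "u2 \<in> \<rat>" "v2 \<in> \<rat>" "w2 \<in> \<rat>" "y = u2 + v2 * th + w2 * th^2"
    using rep_exists[OF y] by blast
  have e: "x + y = (u + u2) + (v + v2) * th + (w + w2) * th^2" using a b by (simp add: algebra_simps)
  have "emb z (x + y) = of_real (u + u2) + of_real (v + v2) * z + of_real (w + w2) * z^2"
    unfolding e by (rule emb_rep) (use a b in auto)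
  also have "\<dots> = emb z x + emb z y" unfolding a(4) b(4) emb_rep[OF a(1-3)] emb_rep[OF b(1-3)]
    by (simp add: algebra_simps)
  finally show ?thesis .
qed

lemma emb_rat: "r \<in> \<rat> \<Longrightarrow> emb z r = of_real r"
  using emb_rep[of r 0 0 z] by simp

lemma emb_th: "emb z th = z"
  using emb_rep[of 0 1 0 z] by simp

lemma emb_uminus: "x \<in> K \<Longrightarrow> good z \<Longrightarrow> emb z (- x) = - emb z x"
  using emb_mult[of z "-1" x] emb_rat[of "-1" z] K_rat[of "-1"] by simp

lemma emb_diff: "x \<in> K \<Longrightarrow> y \<in> K \<Longrightarrow> good z \<Longrightarrow> emb z (x - y) = emb z x - emb z y"
  using emb_add[of x "-y" z] emb_uminus[of y z] K_uminus[of y] by simp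

lemma emb_power: "x \<in> K \<Longrightarrow> good z \<Longrightarrow> emb z (x ^ n) = emb z x ^ n"
  by (induction n) (simp_all add: emb_rat emb_mult K_power)

lemma emb_nonzero: "x \<in> K \<Longrightarrow> x \<noteq> 0 \<Longrightarrow> good z \<Longrightarrow> emb z x \<noteq> 0"
  using emb_mult[of z x "inverse x"] K_inverse[of x] emb_rat[of 1 z] by auto

lemma emb_inverse: "x \<in> K \<Longrightarrow> good z \<Longrightarrow> emb z (inverse x) = inverse (emb z x)"
proof (cases "x = 0")
  case True then show ?thesis using emb_rat[of 0 z] by simp
next
  case False
  assume x: "x \<in> K" "good z"
  have "emb z x * emb z (inverse x) = 1"
    using emb_mult[of z x "inverse x"] K_inverse[of x] emb_rat[of 1 z] x False by simp
  then show ?thesis using inverse_unique by metis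
qed

lemma emb_divide: "x \<in> K \<Longrightarrow> y \<in> K \<Longrightarrow> good z \<Longrightarrow> emb z (x / y) = emb z x / emb z y"
  using emb_mult[of z x "inverse y"] emb_inverse[of y z] K_inverse[of y] by (simp add: divide_inverse)

lemma emb_in: "good z \<Longrightarrow> emb z \<in> complex_embeddings K"
  unfolding complex_embeddings_def
proof (intro CollectI conjI ballI allI impI)
  assume "good z"
  show "emb z 1 = 1" using emb_rat[of 1 z] by simp
  show "emb z (x + y) = emb z x + emb z y" if "x \<in> K" "y \<in> K" for x y using emb_add that .
  show "emb z (x * y) = emb z x * emb z y" if "x \<in> K" "y \<in> K" for x y using emb_mult \<open>good z\<close> that .
  show "emb z x = 0" if "x \<notin> K" for x using that by (simp add: emb_def)
qed

lemma idK_real: "(\<lambda>x. if x \<in> K then complex_of_real x else 0) \<in> real_embeddings K"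
  unfolding real_embeddings_def complex_embeddings_def using K_rat[of 1] by (auto intro: K_add K_mult)

lemma only_id:
  assumes "tau \<in> real_embeddings K"
  shows "tau th = of_real th"
proof -
  obtain e where e: "real_embeddings K = {e}" using single card_1_singletonE by blast
  then have "tau = (\<lambda>x. if x \<in> K then complex_of_real x else 0)" using assms idK_real by auto
  then show ?thesis using thK by simp
qed

end

context cubicG
begin

definition pp :: real where "pp = th - of_int A"
definition qq :: real where "qq = th^2 - of_int A * th - of_int B"
definition dd :: real where "dd = pp^2 - 4 * qq"

lemma C_eq: "of_int C = qq * th"
  using threl unfolding qq_def by (simp add: algebra_simps power2_eq_square power3_eq_cube)

lemma good_quad:
  assumes "z^2 + of_real pp * z + of_real qq = 0"
  shows "good z"
proof -
  have "z^3 - of_int A * z^2 - of_int B * z - of_int C = (z - of_real th) * (z^2 + of_real pp * z + of_real qq)"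
  proof -
    have "(of_int C :: complex) = of_real (qq * th)" using C_eq by (metis of_real_of_int_eq)
    then show ?thesis unfolding pp_def qq_def
      by (simp add: algebra_simps power2_eq_square power3_eq_cube)
  qed
  then show ?thesis using assms unfolding good_def by algebra
qed

lemma emb_real_root:
  assumes "r^2 + pp * r + qq = 0"
  shows "emb (of_real r) \<in> real_embeddings K"
proof -
  have g: "good (of_real r)"
    by (rule good_quad) (use arg_cong[OF assms, of "of_real :: real \<Rightarrow> complex"] in simp)
  have "emb (of_real r) x \<in> \<real>" if xK: "x \<in> K" for x
  proof -
    obtain u v w where a: "u \<in> \<rat>" "v \<in> \<rat>" "w \<in> \<rat>" "x = u + v * th + w * th^2"
      using rep_exists[OF xK] by blast
    show ?thesis unfolding a(4) emb_rep[OF a(1-3)] by simp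
  qed
  then show ?thesis using emb_in[OF g] unfolding real_embeddings_def by blast
qed

lemma real_root_contra:
  assumes "r^2 + pp * r + qq = 0" "r \<noteq> th"
  shows False
  using only_id[OF emb_real_root[OF assms(1)]] emb_th[of "of_real r"] assms(2) by simp

lemma disc_neg: "dd < 0"
proof (rule ccontr)
  assume "\<not> dd < 0"
  then have d0: "dd \<ge> 0" by simp
  define s where "s = sqrt dd"
  have s2: "s^2 = dd" using d0 by (simp add: s_def)
  have r1: "((- pp + s) / 2)^2 + pp * ((- pp + s) / 2) + qq = 0"
    using s2 unfolding dd_def by (simp add: field_simps power2_eq_square)
  have r2: "((- pp - s) / 2)^2 + pp * ((- pp - s) / 2) + qq = 0"
    using s2 unfolding dd_def by (simp add: field_simps power2_eq_square)
  have e1: "(- pp + s) / 2 = th" using real_root_contra[OF r1] by blast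
  have e2: "(- pp - s) / 2 = th" using real_root_contra[OF r2] by blast
  from e1 e2 have "th = - pp / 2" by simp
  then have e: "th = of_int A / 3" unfolding pp_def by simp
  have "th \<in> \<rat>" by (subst e) simp
  then show False using thQ by simp
qed

definition zeta :: complex where "zeta = Complex (- pp / 2) (sqrt (- dd) / 2)"

lemma sqrt_dd: "sqrt (- dd) ^ 2 = - dd" using disc_neg by simp

lemma zeta_quad: "zeta^2 + of_real pp * zeta + of_real qq = 0"
proof -
  have "Re (zeta^2 + of_real pp * zeta + of_real qq) = 0"
    using sqrt_dd unfolding zeta_def dd_def by (simp add: power2_eq_square field_simps)
  moreover have "Im (zeta^2 + of_real pp * zeta + of_real qq) = 0"
    unfolding zeta_def by (simp add: power2_eq_square field_simps)
  ultimately show ?thesis by (simp add: complex_eq_iff)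
qed

lemma good_zeta: "good zeta" by (rule good_quad[OF zeta_quad])

lemma Im_zeta: "Im zeta > 0" using disc_neg by (simp add: zeta_def)

lemma zeta_sum: "zeta + cnj zeta = of_real (- pp)"
  by (simp add: zeta_def complex_eq_iff)

lemma zeta_prod: "zeta * cnj zeta = of_real qq"
proof -
  have "zeta * cnj zeta = of_real ((pp/2)^2 + (sqrt (- dd) / 2)^2)"
    by (simp add: zeta_def complex_eq_iff power2_eq_square)
  also have "(pp/2)^2 + (sqrt (- dd) / 2)^2 = qq" using sqrt_dd unfolding dd_def
    by (simp add: power_divide field_simps)
  finally show ?thesis .
qed

definition sg :: "real \<Rightarrow> complex" where "sg = emb zeta"

lemma sg_th: "sg th = zeta" by (simp add: sg_def emb_th)

lemma sg_add: "x \<in> K \<Longrightarrow> y \<in> K \<Longrightarrow> sg (x + y) = sg x + sg y"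
  by (simp add: sg_def emb_add)
lemma sg_mult: "x \<in> K \<Longrightarrow> y \<in> K \<Longrightarrow> sg (x * y) = sg x * sg y"
  by (simp add: sg_def emb_mult good_zeta)
lemma sg_rat: "r \<in> \<rat> \<Longrightarrow> sg r = of_real r"
  by (simp add: sg_def emb_rat)
lemma sg_diff: "x \<in> K \<Longrightarrow> y \<in> K \<Longrightarrow> sg (x - y) = sg x - sg y"
  by (simp add: sg_def emb_diff good_zeta)
lemma sg_uminus: "x \<in> K \<Longrightarrow> sg (- x) = - sg x"
  by (simp add: sg_def emb_uminus good_zeta)
lemma sg_power: "x \<in> K \<Longrightarrow> sg (x ^ n) = sg x ^ n"
  by (simp add: sg_def emb_power good_zeta)
lemma sg_inverse: "x \<in> K \<Longrightarrow> sg (inverse x) = inverse (sg x)"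
  by (simp add: sg_def emb_inverse good_zeta)
lemma sg_divide: "x \<in> K \<Longrightarrow> y \<in> K \<Longrightarrow> sg (x / y) = sg x / sg y"
  by (simp add: sg_def emb_divide good_zeta)
lemma sg_nonzero: "x \<in> K \<Longrightarrow> x \<noteq> 0 \<Longrightarrow> sg x \<noteq> 0"
  by (simp add: sg_def emb_nonzero good_zeta)
lemma sg_rep: "u \<in> \<rat> \<Longrightarrow> v \<in> \<rat> \<Longrightarrow> w \<in> \<rat> \<Longrightarrow> sg (u + v * th + w * th^2) = of_real u + of_real v * zeta + of_real w * zeta^2"
  by (simp add: sg_def emb_rep)

lemma Im_sg_irr:
  assumes a: "a \<in> K" "a \<notin> \<rat>"
  shows "Im (sg a) \<noteq> 0"
proof
  assume im: "Im (sg a) = 0"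
  have "sg x \<in> \<real>" if xK: "x \<in> K" for x
  proof -
    obtain u v w where r: "u \<in> \<rat>" "v \<in> \<rat>" "w \<in> \<rat>" "x = u + v * a + w * a^2"
      using span_pow[OF a xK] by blast
    have "sg x = of_real u + of_real v * sg a + of_real w * sg a ^ 2"
      unfolding r(4) using r(1-3) a(1)
      by (simp add: sg_add sg_mult sg_rat sg_power K_add K_mult K_rat K_power)
    moreover have "sg a \<in> \<real>" using im by (simp add: complex_is_Real_iff)
    ultimately show ?thesis by simp
  qed
  then have "sg \<in> real_embeddings K" using emb_in[OF good_zeta] unfolding real_embeddings_def sg_def by blast
  from only_id[OF this] have "zeta = of_real th" by (simp add: sg_th)
  then show False using Im_zeta by simp
qed

end

context cubicG
begin

definition inO :: "real \<Rightarrow> bool" where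
  "inO x \<longleftrightarrow> (\<exists>a b c :: int. x = of_int a + of_int b * th + of_int c * th^2)"

lemma inO_K: "inO x \<Longrightarrow> x \<in> K"
  unfolding inO_def using rep_K by auto

lemma inO_int: "inO (of_int k)"
  unfolding inO_def by (rule exI[of _ k], rule exI[of _ 0], rule exI[of _ 0]) simp

lemma inO_th: "inO th"
  unfolding inO_def by (rule exI[of _ 0], rule exI[of _ 1], rule exI[of _ 0]) simp

lemma inO_add: "inO x \<Longrightarrow> inO y \<Longrightarrow> inO (x + y)"
  unfolding inO_def
proof (elim exE)
  fix a b c a2 b2 c2 :: int
  assume "x = of_int a + of_int b * th + of_int c * th^2" "y = of_int a2 + of_int b2 * th + of_int c2 * th^2"
  then have "x + y = of_int (a + a2) + of_int (b + b2) * th + of_int (c + c2) * th^2" by (simp add: algebra_simps)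
  then show "\<exists>a b c :: int. x + y = of_int a + of_int b * th + of_int c * th^2" by blast
qed

lemma inO_uminus: "inO x \<Longrightarrow> inO (- x)"
  unfolding inO_def
proof (elim exE)
  fix a b c :: int
  assume "x = of_int a + of_int b * th + of_int c * th^2"
  then have "- x = of_int (- a) + of_int (- b) * th + of_int (- c) * th^2" by (simp add: algebra_simps)
  then show "\<exists>a b c :: int. - x = of_int a + of_int b * th + of_int c * th^2" by blast
qed

lemma inO_diff: "inO x \<Longrightarrow> inO y \<Longrightarrow> inO (x - y)"
  using inO_add[of x "- y"] inO_uminus[of y] by simp

lemma inO_mult: "inO x \<Longrightarrow> inO y \<Longrightarrow> inO (x * y)"
  unfolding inO_def
proof (elim exE)
  fix u v w u2 v2 w2 :: int
  assume a: "x = of_int u + of_int v * th + of_int w * th^2" "y = of_int u2 + of_int v2 * th + of_int w2 * th^2"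
  have "x * y = of_int (u * u2 + C * (v * w2 + w * v2) + A * C * (w * w2)) +
     of_int (u * v2 + v * u2 + B * (v * w2 + w * v2) + (A * B + C) * (w * w2)) * th +
     of_int (u * w2 + v * v2 + w * u2 + A * (v * w2 + w * v2) + (A^2 + B) * (w * w2)) * th^2"
    unfolding a using prod_red[OF threl, of "of_int u" "of_int v" "of_int w" "of_int u2" "of_int v2" "of_int w2"]
    by simp
  then show "\<exists>a b c :: int. x * y = of_int a + of_int b * th + of_int c * th^2" by blast
qed

lemma inO_power: "inO x \<Longrightarrow> inO (x ^ n)"
  by (induction n) (use inO_int[of 1] inO_mult in auto)

lemma inO_two: "inO 2" using inO_int[of 2] by simp

lemma inO_pp: "inO pp" unfolding pp_def by (intro inO_diff inO_th inO_int)
lemma inO_qq: "inO qq" unfolding qq_def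
  by (intro inO_diff inO_mult inO_th inO_int inO_power)

lemma inO_rat: "inO x \<Longrightarrow> x \<in> \<rat> \<Longrightarrow> x \<in> \<int>"
proof -
  assume "inO x" "x \<in> \<rat>"
  then obtain a b c :: int where x: "x = of_int a + of_int b * th + of_int c * th^2" unfolding inO_def by blast
  have "x + 0 * th + 0 * th^2 = of_int a + of_int b * th + of_int c * th^2" using x by simp
  from rep_unique[OF \<open>x \<in> \<rat>\<close> _ _ _ _ _ this] have "x = of_int a" by simp
  then show ?thesis by simp
qed

definition tr :: "real \<Rightarrow> real" where "tr x = x + 2 * Re (sg x)"

lemma two_Re: "complex_of_real (2 * Re z) = z + cnj z"
  by (simp add: complex_add_cnj)

lemma tr_rep:
  assumes "u \<in> \<rat>" "v \<in> \<rat>" "w \<in> \<rat>"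
  shows "tr (u + v * th + w * th^2) = 3 * u + v * of_int A + w * (of_int A ^ 2 + 2 * of_int B)"
proof -
  have S: "zeta + cnj zeta = of_real (- pp)" by (rule zeta_sum)
  have P: "zeta * cnj zeta = of_real qq" by (rule zeta_prod)
  have "complex_of_real (tr (u + v * th + w * th^2)) =
    of_real (u + v * th + w * th^2) + (of_real u + of_real v * zeta + of_real w * zeta^2)
      + cnj (of_real u + of_real v * zeta + of_real w * zeta^2)"
    unfolding tr_def of_real_add two_Re sg_rep[OF assms] by (simp only: add.assoc)
  also have "\<dots> = of_real (3 * u + v * (th - pp) + w * (th^2 + pp^2 - 2 * qq))"
  proof -
    have c: "cnj (of_real u + of_real v * zeta + of_real w * zeta^2) = of_real u + of_real v * cnj zeta + of_real w * cnj zeta^2" by simp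
    show ?thesis unfolding c of_real_add of_real_mult of_real_diff of_real_power of_real_numeral using S[unfolded of_real_minus] P by algebra
  qed
  also have "3 * u + v * (th - pp) + w * (th^2 + pp^2 - 2 * qq) = 3 * u + v * of_int A + w * (of_int A ^ 2 + 2 * of_int B)"
    unfolding pp_def qq_def by (simp add: algebra_simps power2_eq_square)
  finally show ?thesis by (simp only: of_real_eq_iff)
qed

lemma tr_rat: "x \<in> K \<Longrightarrow> tr x \<in> \<rat>"
proof -
  assume "x \<in> K"
  then obtain u v w where a: "u \<in> \<rat>" "v \<in> \<rat>" "w \<in> \<rat>" "x = u + v * th + w * th^2" using rep_exists by blast
  show ?thesis unfolding a(4) tr_rep[OF a(1-3)] using a(1-3) by simp
qed

lemma tr_int: "inO x \<Longrightarrow> tr x \<in> \<int>"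
proof -
  assume "inO x"
  then obtain a b c :: int where x: "x = of_int a + of_int b * th + of_int c * th^2" unfolding inO_def by blast
  show ?thesis unfolding x using tr_rep[of "of_int a" "of_int b" "of_int c"] by simp
qed

definition nm :: "real \<Rightarrow> real" where "nm x = x * (cmod (sg x))^2"

lemma nm_mult: "x \<in> K \<Longrightarrow> y \<in> K \<Longrightarrow> nm (x * y) = nm x * nm y"
  by (simp add: nm_def sg_mult norm_mult power_mult_distrib)

lemma nm_one: "nm 1 = 1"
  using sg_rat[of 1] by (simp add: nm_def)

lemma nm_nonzero: "x \<in> K \<Longrightarrow> x \<noteq> 0 \<Longrightarrow> nm x \<noteq> 0"
  using sg_nonzero by (simp add: nm_def)

lemma nm_pos: "x \<in> K \<Longrightarrow> x > 0 \<Longrightarrow> nm x > 0"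
  using sg_nonzero[of x] by (simp add: nm_def)

lemma cmod_sq: "complex_of_real ((cmod z)^2) = z * cnj z"
  using complex_norm_square[of z] by simp

lemma nm_W: "inO x \<Longrightarrow> \<exists>W. inO W \<and> nm x = x * W \<and> W = (cmod (sg x))^2"
proof -
  assume "inO x"
  then obtain a b c :: int where x: "x = of_int a + of_int b * th + of_int c * th^2" unfolding inO_def by blast
  define W where "W = of_int a ^ 2 - of_int a * of_int b * pp + of_int a * of_int c * (pp^2 - 2 * qq)
     + of_int b ^ 2 * qq - of_int b * of_int c * qq * pp + of_int c ^ 2 * qq^2"
  have "inO W" unfolding W_def
    by (intro inO_add inO_diff inO_mult inO_int inO_power inO_pp inO_qq inO_two)
  moreover have "(cmod (sg x))^2 = W"
  proof -
    have sx: "sg x = of_int a + of_int b * zeta + of_int c * zeta^2"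
      unfolding x using sg_rep[of "of_int a" "of_int b" "of_int c"] by simp
    have "complex_of_real ((cmod (sg x))^2) = sg x * cnj (sg x)" by (rule cmod_sq)
    also have "\<dots> = of_int a ^ 2 + of_int a * of_int b * (zeta + cnj zeta) + of_int a * of_int c * ((zeta + cnj zeta)^2 - 2 * (zeta * cnj zeta))
      + of_int b ^ 2 * (zeta * cnj zeta) + of_int b * of_int c * (zeta * cnj zeta) * (zeta + cnj zeta) + of_int c ^ 2 * (zeta * cnj zeta)^2"
      unfolding sx by (simp add: algebra_simps power2_eq_square)
    also have "\<dots> = complex_of_real W"
      unfolding zeta_sum zeta_prod W_def by (simp add: algebra_simps power2_eq_square)
    finally show ?thesis by (simp only: of_real_eq_iff)
  qed
  ultimately show ?thesis by (auto simp: nm_def)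
qed

lemma nm_rat: "x \<in> K \<Longrightarrow> nm x \<in> \<rat>"
proof -
  assume xK: "x \<in> K"
  define v where "v = sg x"
  have t: "complex_of_real (tr (x ^ k)) = of_real x ^ k + v ^ k + cnj v ^ k" for k
    unfolding tr_def v_def using two_Re[of "sg (x ^ k)"] sg_power[OF xK, of k] by simp
  have "complex_of_real (6 * nm x) = of_real (tr x ^ 3 - 3 * tr x * tr (x^2) + 2 * tr (x^3))"
  proof -
    have n: "complex_of_real (nm x) = of_real x * (v * cnj v)"
      unfolding nm_def v_def using cmod_sq[of "sg x"] by simp
    have t1: "complex_of_real (tr x) = of_real x + v + cnj v" using t[of 1] by simp
    show ?thesis using n t1 t[of 2] t[of 3]
      by (simp add: algebra_simps power2_eq_square power3_eq_cube)
  qed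
  then have "6 * nm x = tr x ^ 3 - 3 * tr x * tr (x^2) + 2 * tr (x^3)" by (simp only: of_real_eq_iff)
  moreover have "tr x ^ 3 - 3 * tr x * tr (x^2) + 2 * tr (x^3) \<in> \<rat>"
    using tr_rat[OF xK] tr_rat[OF K_power[OF xK]] by simp
  ultimately have "6 * nm x \<in> \<rat>" by simp
  then have "(6 * nm x) / 6 \<in> \<rat>" by (rule Rats_divide) simp
  then show ?thesis by simp
qed

lemma nm_int: "inO x \<Longrightarrow> nm x \<in> \<int>"
proof -
  assume x: "inO x"
  then obtain W where "inO W" "nm x = x * W" using nm_W by blast
  then have "inO (nm x)" using inO_mult[OF x] by simp
  then show ?thesis using inO_rat nm_rat inO_K x by blast
qed

end

lemma floor_same: "\<lfloor>a::real\<rfloor> = \<lfloor>b\<rfloor> \<Longrightarrow> \<bar>a - b\<bar> < 1"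
  using floor_correct[of a] floor_correct[of b] by linarith

lemma floor_range: "0 \<le> (t::real) \<Longrightarrow> t \<le> of_int k \<Longrightarrow> \<lfloor>t\<rfloor> \<in> {0..k}"
  by (simp add: floor_le_iff)

context cubicG
begin

definition XX :: "int \<times> int \<times> int \<Rightarrow> real" where
  "XX t = (case t of (a,b,c) \<Rightarrow> of_int a + of_int b * th + of_int c * th^2)"
definition ZZ :: "int \<times> int \<times> int \<Rightarrow> complex" where
  "ZZ t = (case t of (a,b,c) \<Rightarrow> of_int a + of_int b * zeta + of_int c * zeta^2)"

lemma inO_XX: "inO (XX t)"
  unfolding inO_def XX_def by (cases t) auto

lemma sg_XX: "sg (XX t) = ZZ t"
  unfolding XX_def ZZ_def using sg_rep[of "of_int (fst t)" "of_int (fst (snd t))" "of_int (snd (snd t))"]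
  by (cases t) simp

lemma XX_diff: "XX (a1,b1,c1) - XX (a2,b2,c2) = XX (a1-a2, b1-b2, c1-c2)"
  unfolding XX_def by (simp add: algebra_simps)
lemma ZZ_diff: "ZZ (a1,b1,c1) - ZZ (a2,b2,c2) = ZZ (a1-a2, b1-b2, c1-c2)"
  unfolding ZZ_def by (simp add: algebra_simps)

lemma XX_zero: "XX (a,bq,c) = 0 \<Longrightarrow> a = 0 \<and> bq = 0 \<and> c = 0"
proof -
  assume "XX (a,bq,c) = 0"
  then have "of_int a + of_int bq * th + of_int c * th^2 = 0 + 0 * th + 0 * th^2" by (simp add: XX_def)
  from rep_unique[OF _ _ _ _ _ _ this] show ?thesis by simp
qed

definition LL :: real where "LL = 1 + \<bar>th\<bar> + th^2"
definition LZ :: real where "LZ = 1 + cmod zeta + cmod zeta ^ 2"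

lemma LL_pos: "LL \<ge> 1" unfolding LL_def by simp
lemma LZ_pos: "LZ \<ge> 1" unfolding LZ_def by simp

lemma XX_bound:
  assumes "\<bar>a\<bar> \<le> H" "\<bar>bq\<bar> \<le> H" "\<bar>c\<bar> \<le> H"
  shows "\<bar>XX (a,bq,c)\<bar> \<le> of_int H * LL"
proof -
  have "\<bar>XX (a,bq,c)\<bar> \<le> \<bar>of_int a + of_int bq * th\<bar> + \<bar>of_int c * th^2\<bar>"
    unfolding XX_def prod.case by (rule abs_triangle_ineq)
  also have "\<dots> \<le> \<bar>of_int a\<bar> + \<bar>of_int bq * th\<bar> + \<bar>of_int c * th^2\<bar>"
    by (intro add_mono abs_triangle_ineq order_refl)
  also have "\<dots> = \<bar>of_int a\<bar> + \<bar>of_int bq\<bar> * \<bar>th\<bar> + \<bar>of_int c\<bar> * th^2"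
    by (simp add: abs_mult)
  also have "\<dots> \<le> of_int H + of_int H * \<bar>th\<bar> + of_int H * th^2"
    using assms by (intro add_mono mult_right_mono) auto
  finally show ?thesis by (simp add: LL_def algebra_simps)
qed

lemma ZZ_bound:
  assumes "\<bar>a\<bar> \<le> H" "\<bar>bq\<bar> \<le> H" "\<bar>c\<bar> \<le> H"
  shows "cmod (ZZ (a,bq,c)) \<le> of_int H * LZ"
proof -
  have "cmod (ZZ (a,bq,c)) \<le> cmod (of_int a + of_int bq * zeta) + cmod (of_int c * zeta^2)"
    unfolding ZZ_def prod.case by (rule norm_triangle_ineq)
  also have "\<dots> \<le> cmod (of_int a) + cmod (of_int bq * zeta) + cmod (of_int c * zeta^2)"
    by (intro add_mono norm_triangle_ineq order_refl)
  also have "\<dots> = \<bar>of_int a\<bar> + \<bar>of_int bq\<bar> * cmod zeta + \<bar>of_int c\<bar> * cmod zeta ^ 2"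
    by (simp add: norm_mult norm_power)
  also have "\<dots> \<le> of_int H + of_int H * cmod zeta + of_int H * cmod zeta ^ 2"
    using assms by (intro add_mono mult_right_mono) auto
  finally show ?thesis by (simp add: LZ_def algebra_simps)
qed


lemma card_ineq: "(m::nat) \<ge> 1 \<Longrightarrow> (4 * m^4 + 1) * (2 * m + 1)^2 < (4 * m^2 + 1)^3"
proof -
  assume m: "m \<ge> 1"
  have "(2 * m + 1)^2 \<le> (3 * m)^2" using m by (intro power_mono) auto
  moreover have "4 * m^4 + 1 \<le> 5 * m^4" using m by simp
  ultimately have "(4 * m^4 + 1) * (2 * m + 1)^2 \<le> 5 * m^4 * (3 * m)^2" by (intro mult_mono) auto
  also have "\<dots> = 45 * (m^4 * m^2)" by (simp add: power_mult_distrib)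
  also have "45 * (m^4 * m^2) = 45 * m^6" by (simp flip: power_add)
  also have "\<dots> < 64 * m^6" using m by simp
  also have "\<dots> = (4 * m^2)^3" by (simp add: power_mult_distrib flip: power_mult)
  also have "\<dots> < (4 * m^2 + 1)^3" by (intro power_strict_mono) auto
  finally show ?thesis .
qed

lemma small_elt:
  assumes m: "m \<ge> (1::nat)"
  shows "\<exists>y. inO y \<and> 0 < y \<and> y < 2 * LL / real m ^ 2 \<and> nm y < 64 * LL * LZ^2"
proof -
  define M where "M = real m"
  define H :: int where "H = 4 * int m^2"
  define k1 :: int where "k1 = 4 * int m^4"
  define k2 :: int where "k2 = 2 * int m"
  define d1 where "d1 = 2 * LL / M^2"
  define d2 where "d2 = 4 * M * LZ"
  define R1 where "R1 = of_int H * LL"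
  define R2 where "R2 = of_int H * LZ"
  define P where "P = {0..H} \<times> {0..H} \<times> {0..H}"
  define f where "f t = (\<lfloor>(XX t + R1) / d1\<rfloor>, \<lfloor>(Re (ZZ t) + R2) / d2\<rfloor>, \<lfloor>(Im (ZZ t) + R2) / d2\<rfloor>)" for t
  define Q where "Q = {0..k1} \<times> {0..k2} \<times> {0..k2}"
  have M1: "M \<ge> 1" using m by (simp add: M_def)
  have d1: "d1 > 0" using LL_pos M1 by (simp add: d1_def)
  have d2: "d2 > 0" using LZ_pos M1 by (simp add: d2_def)
  have Hr: "of_int H = 4 * M^2" by (simp add: H_def M_def)
  have k1r: "2 * R1 / d1 = of_int k1"
    using LL_pos M1 unfolding R1_def d1_def Hr k1_def M_def by (simp add: field_simps power2_eq_square eval_nat_numeral)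
  have k2r: "2 * R2 / d2 = of_int k2"
    using LZ_pos M1 unfolding R2_def d2_def Hr k2_def M_def by (simp add: field_simps power2_eq_square)
  have rng: "\<lfloor>(x + R) / d\<rfloor> \<in> {0..k}" if "\<bar>x\<bar> \<le> R" "d > 0" "2 * R / d = of_int k" for x R d :: real and k
  proof (rule floor_range)
    show "0 \<le> (x + R) / d" using that by simp
    have "(x + R) / d \<le> 2 * R / d" using that by (intro divide_right_mono) auto
    then show "(x + R) / d \<le> of_int k" using that by simp
  qed
  have fQ: "f ` P \<subseteq> Q"
  proof
    fix z assume "z \<in> f ` P"
    then obtain a bq c where t: "(a,bq,c) \<in> P" "z = f (a,bq,c)" by auto
    have ab: "\<bar>a\<bar> \<le> H" "\<bar>bq\<bar> \<le> H" "\<bar>c\<bar> \<le> H" using t(1) by (auto simp: P_def)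
    have x: "\<bar>XX (a,bq,c)\<bar> \<le> R1" unfolding R1_def by (rule XX_bound[OF ab])
    have zb: "cmod (ZZ (a,bq,c)) \<le> R2" unfolding R2_def by (rule ZZ_bound[OF ab])
    have re: "\<bar>Re (ZZ (a,bq,c))\<bar> \<le> R2" using abs_Re_le_cmod zb order_trans by blast
    have im: "\<bar>Im (ZZ (a,bq,c))\<bar> \<le> R2" using abs_Im_le_cmod zb order_trans by blast
    show "z \<in> Q" unfolding t(2) f_def Q_def using rng[OF x d1 k1r] rng[OF re d2 k2r] rng[OF im d2 k2r] by simp
  qed
  have H0: "H \<ge> 0" "k1 \<ge> 0" "k2 \<ge> 0" by (simp_all add: H_def k1_def k2_def)
  have cP: "card P = (4 * m^2 + 1)^3"
    unfolding P_def card_cartesian_product using H0 by (simp add: H_def nat_add_distrib nat_mult_distrib nat_power_eq power3_eq_cube)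
  have cQ: "card Q = (4 * m^4 + 1) * (2 * m + 1)^2"
    unfolding Q_def card_cartesian_product using H0 by (simp add: k1_def k2_def nat_add_distrib nat_mult_distrib nat_power_eq power2_eq_square)
  have "card (f ` P) \<le> card Q" by (rule card_mono[OF _ fQ]) (simp add: Q_def)
  then have "card (f ` P) < card P" using card_ineq[OF m] cP cQ by simp
  then have "\<not> inj_on f P" by (rule pigeonhole)
  then obtain t1 t2 where tt: "t1 \<in> P" "t2 \<in> P" "t1 \<noteq> t2" "f t1 = f t2" unfolding inj_on_def by blast
  obtain a1 b1 c1 where t1: "t1 = (a1,b1,c1)" by (cases t1) auto
  obtain a2 b2 c2 where t2: "t2 = (a2,b2,c2)" by (cases t2) auto
  define dt where "dt = (a1 - a2, b1 - b2, c1 - c2)"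
  have XXd: "XX dt = XX t1 - XX t2" unfolding dt_def t1 t2 XX_diff ..
  have ZZd: "ZZ dt = ZZ t1 - ZZ t2" unfolding dt_def t1 t2 ZZ_diff ..
  have fl: "\<lfloor>(XX t1 + R1) / d1\<rfloor> = \<lfloor>(XX t2 + R1) / d1\<rfloor>"
     "\<lfloor>(Re (ZZ t1) + R2) / d2\<rfloor> = \<lfloor>(Re (ZZ t2) + R2) / d2\<rfloor>"
     "\<lfloor>(Im (ZZ t1) + R2) / d2\<rfloor> = \<lfloor>(Im (ZZ t2) + R2) / d2\<rfloor>"
    using tt(4) by (simp_all add: f_def)
  have dv: "\<bar>x - y\<bar> < d" if "\<lfloor>(x + R) / d\<rfloor> = \<lfloor>(y + R) / d\<rfloor>" "d > 0" for x y R d :: real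
  proof -
    have "\<bar>(x + R) / d - (y + R) / d\<bar> < 1" by (rule floor_same[OF that(1)])
    also have "(x + R) / d - (y + R) / d = (x - y) / d" by (simp add: diff_divide_distrib[symmetric])
    finally have "\<bar>x - y\<bar> / d < 1" using that(2) by (simp add: abs_divide)
    then show ?thesis using that(2) by (simp add: divide_less_eq_1_pos)
  qed
  have bX: "\<bar>XX dt\<bar> < d1" unfolding XXd using dv[OF fl(1) d1] .
  have bR: "\<bar>Re (ZZ dt)\<bar> < d2" unfolding ZZd using dv[OF fl(2) d2] by simp
  have bI: "\<bar>Im (ZZ dt)\<bar> < d2" unfolding ZZd using dv[OF fl(3) d2] by simp
  have nz: "XX dt \<noteq> 0"
  proof
    assume "XX dt = 0"
    then have "a1 - a2 = 0 \<and> b1 - b2 = 0 \<and> c1 - c2 = 0" unfolding dt_def by (rule XX_zero)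
    then show False using tt(3) t1 t2 by simp
  qed
  define y where "y = \<bar>XX dt\<bar>"
  have yO: "inO y" unfolding y_def using inO_XX[of dt] inO_uminus[of "XX dt"] by (cases "XX dt \<ge> 0") auto
  have sy: "cmod (sg y) = cmod (ZZ dt)"
  proof (cases "XX dt \<ge> 0")
    case True then show ?thesis by (simp add: y_def sg_XX)
  next
    case False
    then have "y = - XX dt" by (simp add: y_def)
    then show ?thesis using sg_uminus[OF inO_K[OF inO_XX[of dt]]] by (simp add: sg_XX)
  qed
  have c2: "(cmod (ZZ dt))^2 \<le> 2 * d2^2"
  proof -
    have "(cmod (ZZ dt))^2 = (Re (ZZ dt))^2 + (Im (ZZ dt))^2" by (simp add: cmod_power2)
    also have "\<dots> \<le> d2^2 + d2^2"
      using power_mono[OF less_imp_le[OF bR], of 2] power_mono[OF less_imp_le[OF bI], of 2]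
      by (intro add_mono) simp_all
    finally show ?thesis by simp
  qed
  have ypos: "y > 0" using nz by (simp add: y_def)
  have "nm y = y * (cmod (ZZ dt))^2" by (simp add: nm_def sy)
  also have "\<dots> < d1 * (2 * d2^2)"
  proof -
    have "y * (cmod (ZZ dt))^2 \<le> y * (2 * d2^2)" using c2 ypos by (intro mult_left_mono) auto
    also have "\<dots> < d1 * (2 * d2^2)" using bX d2 by (intro mult_strict_right_mono) (auto simp: y_def)
    finally show ?thesis .
  qed
  also have "d1 * (2 * d2^2) = 64 * LL * LZ^2"
  proof -
    have "M^2 \<noteq> 0" using M1 by simp
    have "d1 * (2 * d2^2) = 2 * LL / M^2 * (32 * M^2 * LZ^2)" unfolding d1_def d2_def by (simp add: power_mult_distrib)
    also have "\<dots> = 64 * LL * LZ^2" using \<open>M^2 \<noteq> 0\<close> by simp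
    finally show ?thesis .
  qed
  finally have "nm y < 64 * LL * LZ^2" .
  moreover have "y < 2 * LL / real m ^ 2" using bX by (simp add: y_def d1_def M_def)
  ultimately show ?thesis using yO ypos by blast
qed

end

context cubicG
begin

definition Bd :: real where "Bd = 64 * LL * LZ^2"
definition SS :: "real set" where "SS = {y. inO y \<and> 0 < y \<and> nm y < Bd}"

lemma SS_infinite: "infinite SS"
proof
  assume fin: "finite SS"
  obtain y0 where "inO y0 \<and> 0 < y0 \<and> y0 < 2 * LL / real (1::nat) ^ 2 \<and> nm y0 < 64 * LL * LZ^2"
    using small_elt[of 1] by auto
  then have ne: "SS \<noteq> {}" by (auto simp: SS_def Bd_def)
  define mu where "mu = Min SS"
  have mu: "mu \<in> SS" unfolding mu_def using fin ne by (rule Min_in)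
  then have mu0: "mu > 0" by (simp add: SS_def)
  define m where "m = nat \<lceil>2 * LL / mu\<rceil> + 1"
  have m1: "m \<ge> 1" by (simp add: m_def)
  have "real m > 2 * LL / mu" unfolding m_def by linarith
  then have lt: "2 * LL / real m < mu" using mu0 m1 by (simp add: field_simps)
  have "real m \<le> real m ^ 2" using m1 by (simp add: power2_eq_square)
  then have "2 * LL / real m ^ 2 \<le> 2 * LL / real m" using m1 LL_pos
    by (intro divide_left_mono) auto
  with lt have lt2: "2 * LL / real m ^ 2 < mu" by simp
  obtain y where y: "inO y" "0 < y" "y < 2 * LL / real m ^ 2" "nm y < 64 * LL * LZ^2"
    using small_elt[OF m1] by blast
  then have "y \<in> SS" by (simp add: SS_def Bd_def)
  then have "mu \<le> y" unfolding mu_def using fin by (intro Min_le)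
  then show False using y(3) lt2 by simp
qed

definition icrd :: "real \<Rightarrow> int \<times> int \<times> int" where "icrd y = (SOME t. y = XX t)"

lemma icrd: "inO y \<Longrightarrow> y = XX (icrd y)"
proof -
  assume "inO y"
  then obtain a bq c :: int where "y = of_int a + of_int bq * th + of_int c * th^2" unfolding inO_def by blast
  then have "y = XX (a, bq, c)" by (simp add: XX_def)
  then have "\<exists>t. y = XX t" by blast
  then show ?thesis unfolding icrd_def by (rule someI_ex)
qed

lemma XX_scale: "XX (k * a, k * bq, k * c) = of_int k * XX (a, bq, c)"
  by (simp add: XX_def algebra_simps)

lemma nm_Int: "inO y \<Longrightarrow> nm y = of_int \<lfloor>nm y\<rfloor>"
  using nm_int by (metis Ints_cases floor_of_int)

lemma ratio_inO:
  assumes y1: "inO y1" and y2: "inO y2" "y2 \<noteq> 0" and z: "inO z"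
    and d: "y1 - y2 = nm y2 * z"
  shows "inO (y1 / y2)"
proof -
  obtain W where W: "inO W" "nm y2 = y2 * W" using nm_W[OF y2(1)] by blast
  have "y1 / y2 = 1 + (y1 - y2) / y2" using y2(2) by (simp add: field_simps)
  also have "\<dots> = 1 + z * W" unfolding d W(2) using y2(2) by simp
  finally show ?thesis using inO_add[OF inO_int[of 1] inO_mult[OF z W(1)]] by simp
qed

lemma unit_exists: "\<exists>e. inO e \<and> e > 1 \<and> nm e = 1"
proof -
  define cls where "cls y = (let k = \<lfloor>nm y\<rfloor>; t = icrd y in (k, fst t mod k, fst (snd t) mod k, snd (snd t) mod k))" for y
  define K0 where "K0 = \<lceil>Bd\<rceil>"
  have img: "cls ` SS \<subseteq> {0..K0} \<times> {0..K0} \<times> {0..K0} \<times> {0..K0}"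
  proof
    fix x assume "x \<in> cls ` SS"
    then obtain y where y: "y \<in> SS" "x = cls y" by auto
    define k where "k = \<lfloor>nm y\<rfloor>"
    have yO: "inO y" "y > 0" "nm y < Bd" using y(1) by (auto simp: SS_def)
    have nk: "nm y = of_int k" unfolding k_def by (rule nm_Int[OF yO(1)])
    have "nm y > 0" using nm_pos[OF inO_K[OF yO(1)] yO(2)] .
    then have k1: "k > 0" using nk by simp
    have k2: "k \<le> K0" using yO(3) nk unfolding K0_def by (simp add: le_ceiling_iff less_imp_le)
    have "i mod k \<in> {0..K0}" for i
    proof -
      have "0 \<le> i mod k" "i mod k < k" using k1 by simp_all
      then show ?thesis using k2 by simp
    qed
    then show "x \<in> {0..K0} \<times> {0..K0} \<times> {0..K0} \<times> {0..K0}"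
      using k1 k2 unfolding y(2) cls_def k_def[symmetric] Let_def by auto
  qed
  have "\<not> inj_on cls SS"
  proof
    assume "inj_on cls SS"
    moreover have "finite (cls ` SS)" by (rule finite_subset[OF img]) simp
    ultimately have "finite SS" by (rule finite_imageD[rotated])
    then show False using SS_infinite by simp
  qed
  then obtain y1 y2 where yy: "y1 \<in> SS" "y2 \<in> SS" "y1 \<noteq> y2" "cls y1 = cls y2" unfolding inj_on_def by blast
  have y1: "inO y1" "y1 > 0" and y2: "inO y2" "y2 > 0" using yy by (auto simp: SS_def)
  obtain a1 b1 c1 where t1: "icrd y1 = (a1,b1,c1)" by (cases "icrd y1") auto
  obtain a2 b2 c2 where t2: "icrd y2 = (a2,b2,c2)" by (cases "icrd y2") auto
  define k where "k = \<lfloor>nm y1\<rfloor>"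
  have eqs: "\<lfloor>nm y2\<rfloor> = k" "a1 mod k = a2 mod k" "b1 mod k = b2 mod k" "c1 mod k = c2 mod k"
    using yy(4) unfolding cls_def Let_def t1 t2 k_def by auto
  have n1: "nm y1 = of_int k" unfolding k_def by (rule nm_Int[OF y1(1)])
  have n2: "nm y2 = of_int k" using nm_Int[OF y2(1)] eqs(1) by simp
  obtain a3 where a3: "a1 - a2 = k * a3" using eqs(2) mod_eq_dvd_iff by (metis dvd_def)
  obtain b3 where b3: "b1 - b2 = k * b3" using eqs(3) mod_eq_dvd_iff by (metis dvd_def)
  obtain c3 where c3: "c1 - c2 = k * c3" using eqs(4) mod_eq_dvd_iff by (metis dvd_def)
  have d: "y1 - y2 = of_int k * XX (a3, b3, c3)"
  proof -
    have "y1 - y2 = XX (a1,b1,c1) - XX (a2,b2,c2)" using icrd[OF y1(1)] icrd[OF y2(1)] t1 t2 by simp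
    also have "\<dots> = XX (k * a3, k * b3, k * c3)" unfolding XX_diff a3 b3 c3 ..
    finally show ?thesis unfolding XX_scale .
  qed
  have r1: "inO (y1 / y2)"
    by (rule ratio_inO[OF y1(1) y2(1) _ inO_XX]) (use y2(2) d n2 in auto)
  have r2: "inO (y2 / y1)"
    by (rule ratio_inO[OF y2(1) y1(1) _ inO_uminus[OF inO_XX]]) (use y1(2) d n1 in \<open>auto simp: algebra_simps\<close>)
  define e0 where "e0 = y1 / y2"
  have e0K: "e0 \<in> K" "y2 / y1 \<in> K" using r1 r2 inO_K by (auto simp: e0_def)
  have prod1: "nm e0 * nm (y2 / y1) = 1"
  proof -
    have e: "e0 * (y2 / y1) = 1" using y1(2) y2(2) by (simp add: e0_def)
    have "nm e0 * nm (y2 / y1) = nm (e0 * (y2 / y1))" using nm_mult[OF e0K] by simp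
    also have "\<dots> = 1" unfolding e by (rule nm_one)
    finally show ?thesis .
  qed
  have e0pos: "e0 > 0" using y1 y2 by (simp add: e0_def)
  have i1: "nm e0 \<in> \<int>" "nm (y2 / y1) \<in> \<int>" using nm_int r1 r2 by (auto simp: e0_def)
  obtain j1 where j1: "nm e0 = of_int j1" using i1(1) Ints_cases by blast
  obtain j2 where j2: "nm (y2 / y1) = of_int j2" using i1(2) Ints_cases by blast
  have "of_int (j1 * j2) = (of_int 1 :: real)" using prod1 j1 j2 by simp
  then have "j1 * j2 = 1" by (simp only: of_int_eq_iff)
  moreover have "j1 > 0" using nm_pos[OF e0K(1) e0pos] j1 by simp
  ultimately have j: "j1 = 1" "j2 = 1" using pos_zmult_eq_1_iff by auto
  have ne1: "e0 \<noteq> 1" using yy(3) y2(2) by (simp add: e0_def)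
  show ?thesis
  proof (cases "e0 > 1")
    case True then show ?thesis using r1 j j1 by (auto simp: e0_def)
  next
    case False
    then have "e0 < 1" using ne1 by simp
    then have "y2 / y1 > 1" using y1(2) y2(2) by (simp add: e0_def field_simps)
    then show ?thesis using r2 j j2 by auto
  qed
qed

end

lemma dir_step:
  fixes lam :: complex and N :: nat
  assumes N: "N > 0"
  shows "\<exists>n. 1 \<le> n \<and> n \<le> N \<and> \<bar>Im (lam ^ n)\<bar> \<le> 2 * pi * cmod lam ^ n / N"
proof -
  define a where "a = Arg lam"
  obtain q p where qp: "0 < q" "q \<le> int (N ^ 1)" "\<And>i::nat. i < 1 \<Longrightarrow> \<bar>of_int q * (a / (2 * pi)) - of_int (p i)\<bar> < 1 / N"
    by (rule Dirichlet_approx_simult[OF N, where \<theta>="\<lambda>_. a / (2 * pi)" and n=1]) auto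
  define n where "n = nat q"
  have n: "1 \<le> n" "n \<le> N" "real n = of_int q" using qp by (auto simp: n_def)
  have ap: "\<bar>real n * (a / (2 * pi)) - of_int (p 0)\<bar> < 1 / N" using qp(3)[of 0] n(3) by simp
  have l: "lam = rcis (cmod lam) a" using rcis_cmod_Arg[of lam] by (simp add: a_def)
  have "lam ^ n = (rcis (cmod lam) a) ^ n" by (subst l) (rule refl)
  also have "\<dots> = rcis (cmod lam ^ n) (real n * a)" by (rule DeMoivre2)
  finally have "lam ^ n = rcis (cmod lam ^ n) (real n * a)" .
  then have im: "Im (lam ^ n) = cmod lam ^ n * sin (real n * a)" by simp
  have se: "sin (real n * a) = sin (real n * a - 2 * pi * of_int (p 0))"
    by (simp add: sin_diff)
  have "\<bar>sin (real n * a)\<bar> \<le> \<bar>real n * a - 2 * pi * of_int (p 0)\<bar>"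
    unfolding se by (rule abs_sin_x_le_abs_x)
  also have "\<bar>real n * a - 2 * pi * of_int (p 0)\<bar> = 2 * pi * \<bar>real n * (a / (2 * pi)) - of_int (p 0)\<bar>"
  proof -
    have "real n * a - 2 * pi * of_int (p 0) = 2 * pi * (real n * (a / (2 * pi)) - of_int (p 0))"
      by (simp add: field_simps)
    then show ?thesis by (simp add: abs_mult)
  qed
  also have "\<dots> \<le> 2 * pi * (1 / N)" using ap by (intro mult_left_mono) auto
  finally have s: "\<bar>sin (real n * a)\<bar> \<le> 2 * pi / N" by simp
  have "\<bar>Im (lam ^ n)\<bar> = cmod lam ^ n * \<bar>sin (real n * a)\<bar>" unfolding im by (simp add: abs_mult)
  also have "\<dots> \<le> cmod lam ^ n * (2 * pi / N)" using s by (intro mult_left_mono) auto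
  also have "cmod lam ^ n * (2 * pi / N) = 2 * pi * cmod lam ^ n / N" by simp
  finally show ?thesis using n by (intro exI[of _ n]) simp
qed

lemma dir_infinite:
  fixes lam :: complex
  shows "infinite {n::nat. 1 \<le> n \<and> \<bar>Im (lam ^ n)\<bar> \<le> 2 * pi * cmod lam ^ n / n}"
    (is "infinite ?G")
proof
  assume fin: "finite ?G"
  obtain B where B: "\<And>n. n \<in> ?G \<Longrightarrow> n \<le> B" "B \<ge> 1"
  proof -
    obtain B0 where b0: "\<forall>n\<in>?G. n \<le> B0" using fin finite_nat_set_iff_bounded_le by blast
    show ?thesis by (rule that[of "max B0 1"]) (use b0 in auto)
  qed
  have inG: "n \<in> ?G" if "1 \<le> n" "n \<le> N" "\<bar>Im (lam ^ n)\<bar> \<le> 2 * pi * cmod lam ^ n / N" for n N :: nat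
  proof -
    have "2 * pi * cmod lam ^ n / N \<le> 2 * pi * cmod lam ^ n / n"
      using that(1,2) by (intro divide_left_mono) auto
    then show ?thesis using that by simp
  qed
  show False
  proof (cases "\<exists>n0\<in>{1..B}. Im (lam ^ n0) = 0")
    case True
    then obtain n0 where n0: "n0 \<in> {1..B}" "Im (lam ^ n0) = 0" by blast
    have "lam ^ n0 \<in> \<real>" using n0(2) by (simp add: complex_is_Real_iff)
    then have "(lam ^ n0) ^ (B + 1) \<in> \<real>" by simp
    then have "Im ((lam ^ n0) ^ (B + 1)) = 0" using complex_is_Real_iff by blast
    moreover have "lam ^ (n0 * (B + 1)) = (lam ^ n0) ^ (B + 1)" by (rule power_mult)
    ultimately have "Im (lam ^ (n0 * (B + 1))) = 0" by simp
    then have "n0 * (B + 1) \<in> ?G" using n0(1) by simp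
    then have "n0 * (B + 1) \<le> B" by (rule B(1))
    moreover have "1 * (B + 1) \<le> n0 * (B + 1)" using n0(1) by (intro mult_right_mono) auto
    ultimately show False by simp
  next
    case False
    then have lam0: "lam \<noteq> 0" using B(2) by auto
    define r where "r n = \<bar>Im (lam ^ n)\<bar> / cmod lam ^ n" for n
    have rpos: "r n > 0" if "n \<in> {1..B}" for n using False that lam0 by (auto simp: r_def)
    define c where "c = Min (r ` {1..B})"
    have c: "c > 0" unfolding c_def using rpos B(2) by (subst Min_gr_iff) auto
    have cle: "c \<le> r n" if "n \<in> {1..B}" for n unfolding c_def using that by (intro Min_le) auto
    define N where "N = nat \<lceil>2 * pi / c\<rceil> + 1"
    have N0: "N > 0" by (simp add: N_def)
    have Nc: "2 * pi / N < c"
    proof -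
      have "real N > 2 * pi / c" unfolding N_def by linarith
      then show ?thesis using c N0 by (simp add: field_simps)
    qed
    obtain n where n: "1 \<le> n" "n \<le> N" "\<bar>Im (lam ^ n)\<bar> \<le> 2 * pi * cmod lam ^ n / N"
      using dir_step[OF N0, of lam] by blast
    have "n \<in> ?G" by (rule inG[OF n])
    then have nB: "n \<in> {1..B}" using B(1) n(1) by auto
    have cp: "cmod lam ^ n > 0" using lam0 by simp
    have "r n \<le> (2 * pi * cmod lam ^ n / N) / cmod lam ^ n" unfolding r_def
      using n(3) cp by (intro divide_right_mono) auto
    also have "\<dots> = 2 * pi / N" using cp lam0 by simp
    finally have "r n \<le> 2 * pi / N" .
    then show False using cle[OF nB] Nc by simp
  qed
qed

lemma dist_int_le: "y \<in> \<int> \<Longrightarrow> dist_int x \<le> \<bar>x - y\<bar>"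
proof -
  assume "y \<in> \<int>"
  then obtain k where k: "y = of_int k" by (auto elim: Ints_cases)
  have r: "\<bar>x - of_int (round x)\<bar> \<le> 1/2" using of_int_round_abs_le[of x] by (simp add: abs_minus_commute)
  show ?thesis
  proof (cases "\<bar>x - y\<bar> \<ge> 1/2")
    case True then show ?thesis using r by (simp add: dist_int_def)
  next
    case False
    then have "\<bar>x - of_int k\<bar> < 1/2" using k by simp
    then have "round x = k" by (rule round_unique')
    then show ?thesis by (simp add: dist_int_def k)
  qed
qed

context cubicG
begin

lemma exists_den: "x \<in> K \<Longrightarrow> \<exists>d::int. d > 0 \<and> inO (of_int d * x)"
proof -
  assume "x \<in> K"
  then obtain u v w where a: "u \<in> \<rat>" "v \<in> \<rat>" "w \<in> \<rat>" "x = u + v * th + w * th^2" using rep_exists by blast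
  obtain du mu where u: "du > 0" "u = of_int mu / of_int du" using rat_den[OF a(1)] by blast
  obtain dv mv where v: "dv > 0" "v = of_int mv / of_int dv" using rat_den[OF a(2)] by blast
  obtain dw mw where w: "dw > 0" "w = of_int mw / of_int dw" using rat_den[OF a(3)] by blast
  have "of_int (du * dv * dw) * x = of_int (mu * dv * dw) + of_int (mv * du * dw) * th + of_int (mw * du * dv) * th^2"
    using u(1) v(1) w(1) unfolding a(4) u(2) v(2) w(2) by (simp add: field_simps)
  then have "inO (of_int (du * dv * dw) * x)" unfolding inO_def by blast
  moreover have "du * dv * dw > 0" using u v w by simp
  ultimately show ?thesis by blast
qed

lemma inO_int_mult: "inO x \<Longrightarrow> inO (of_int k * x)"
  using inO_mult[OF inO_int] .

lemma tr_err:
  assumes "x \<in> K" "g \<in> K"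
  shows "tr x * g - tr (x * g) = 2 * Re (sg x * (of_real g - sg g))"
proof -
  have "tr x * g - tr (x * g) = 2 * (Re (sg x) * g - Re (sg x * sg g))"
    unfolding tr_def sg_mult[OF assms] by (simp add: algebra_simps)
  also have "Re (sg x) * g - Re (sg x * sg g) = Re (sg x * (of_real g - sg g))"
    by (simp add: algebra_simps)
  finally show ?thesis .
qed

lemma omega_choice:
  assumes aK: "a \<in> K"
  shows "\<exists>w0. w0 \<in> K \<and> w0 \<noteq> 0 \<and> (\<exists>C2\<ge>0. \<forall>z. \<bar>Re (z * (sg w0 * (of_real a - sg a)))\<bar> \<le> C2 * \<bar>Im z\<bar>)"
proof (cases "a \<in> \<rat>")
  case True
  then have "sg a = of_real a" by (rule sg_rat)
  then show ?thesis using K_rat[of 1] by (intro exI[of _ 1]) auto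
next
  case False
  define s where "s = sg a"
  define t where "t = tr a"
  define e2 where "e2 = (t^2 - tr (a^2)) / 2"
  define dl where "dl = 3 * a^2 - 2 * t * a + e2"
  have tQ: "t \<in> \<rat>" "e2 \<in> \<rat>" using tr_rat[OF aK] tr_rat[OF K_power[OF aK]] by (simp_all add: t_def e2_def)
  have tc: "complex_of_real t = of_real a + s + cnj s"
    unfolding t_def tr_def s_def of_real_add two_Re by (simp add: add.assoc)
  have t2c: "complex_of_real (tr (a^2)) = of_real a ^ 2 + s^2 + cnj s ^ 2"
    unfolding tr_def s_def of_real_add two_Re sg_power[OF aK] by simp
  have e2c: "complex_of_real e2 = of_real a * s + of_real a * cnj s + s * cnj s"
  proof -
    have "complex_of_real e2 = (of_real t ^ 2 - of_real (tr (a^2))) / 2" by (simp add: e2_def)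
    also have "\<dots> = of_real a * s + of_real a * cnj s + s * cnj s" unfolding tc t2c
      by (simp add: field_simps power2_eq_square)
    finally show ?thesis .
  qed
  have rK: "3 \<in> K" "2 \<in> K" "t \<in> K" "e2 \<in> K" using tQ by (auto intro!: K_rat)
  have dlK: "dl \<in> K" unfolding dl_def using aK rK by (intro K_add K_diff K_mult K_power)
  have dlc: "complex_of_real dl = (of_real a - s) * (of_real a - cnj s)"
    unfolding dl_def of_real_add of_real_diff of_real_mult of_real_power of_real_numeral e2c tc by algebra
  have sdl: "sg dl = (s - of_real a) * (s - cnj s)"
  proof -
    have "sg dl = 3 * s^2 - 2 * of_real t * s + of_real e2"
      unfolding dl_def using aK tQ sg_rat[of 3] sg_rat[of 2]
      by (simp add: sg_add sg_diff sg_mult sg_rat sg_power s_def K_add K_diff K_mult K_rat K_power)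
    also have "\<dots> = (s - of_real a) * (s - cnj s)" unfolding e2c tc by algebra
    finally show ?thesis .
  qed
  have ims: "Im s \<noteq> 0" unfolding s_def by (rule Im_sg_irr[OF aK False])
  have sns: "s - cnj s \<noteq> 0" using ims by (simp add: complex_eq_iff)
  have sna: "s - of_real a \<noteq> 0" using ims by (auto simp: complex_eq_iff)
  have dl0: "dl \<noteq> 0"
  proof
    assume "dl = 0"
    then have "sg dl = 0" using sg_rat[of 0] by simp
    then show False using sdl sns sna by simp
  qed
  define w0 where "w0 = inverse dl"
  have w0K: "w0 \<in> K" "w0 \<noteq> 0" using dlK dl0 by (simp_all add: w0_def K_inverse)
  have key: "sg w0 * (of_real a - s) = - inverse (s - cnj s)"
  proof -
    have "sg w0 * (of_real a - s) = - ((s - of_real a) * (inverse (s - of_real a) * inverse (s - cnj s)))"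
      unfolding w0_def sg_inverse[OF dlK] sdl inverse_mult_distrib by (simp add: algebra_simps)
    also have "\<dots> = - inverse (s - cnj s)" using sna by simp
    finally show ?thesis .
  qed
  have sc: "s - cnj s = \<i> * of_real (2 * Im s)" by (simp add: complex_eq_iff)
  have "\<bar>Re (z * (sg w0 * (of_real a - sg a)))\<bar> \<le> (1 / \<bar>2 * Im s\<bar>) * \<bar>Im z\<bar>" for z
  proof -
    have "z * (sg w0 * (of_real a - sg a)) = - z * inverse (\<i> * of_real (2 * Im s))"
      unfolding s_def[symmetric] key sc by simp
    also have "\<dots> = \<i> * z / of_real (2 * Im s)" using ims by (simp add: field_simps)
    finally have "Re (z * (sg w0 * (of_real a - sg a))) = - Im z / (2 * Im s)"
      by (simp add: Re_divide_of_real)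
    then show ?thesis by (simp add: abs_divide)
  qed
  then show ?thesis using w0K by (intro exI[of _ w0] conjI exI[of _ "1 / \<bar>2 * Im s\<bar>"]) auto
qed

end

lemma tail_facts:
  fixes tt :: "nat \<Rightarrow> real"
  assumes rho: "rho > 1" and w: "w > 0" and c0: "c0 \<ge> 0"
    and close: "\<And>n. \<bar>tt n - w * (rho ^ n)^2\<bar> \<le> c0"
  shows "\<exists>N0. \<forall>n\<ge>N0. 2 \<le> tt n \<and> tt n < tt (Suc n) \<and> sqrt (tt n) \<le> sqrt (2 * w) * rho ^ n
            \<and> ln (tt n) \<le> 3 * real n * ln rho"
proof -
  define X where "X n = (rho ^ n)^2" for n
  have Xp: "X n = (rho^2) ^ n" for n by (simp add: X_def power_mult[symmetric] mult.commute)
  have r2: "rho^2 > 1" using rho by (simp add: one_less_power)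
  define E0 where "E0 = max ((2 * c0 + 2) / w) ((2 * c0 + 1) / (w * (rho^2 - 1)))"
  obtain Na where Na: "E0 < (rho^2) ^ Na" using real_arch_pow[OF r2] by blast
  define Nb where "Nb = nat \<lceil>ln (2 * w) / ln rho\<rceil>"
  have lnr: "ln rho > 0" using rho by simp
  show ?thesis
  proof (intro exI[of _ "max Na Nb"] allI impI)
    fix n assume n: "max Na Nb \<le> n"
    have "(rho^2) ^ Na \<le> (rho^2) ^ n" using n r2 by (intro power_increasing) auto
    then have XE: "X n > E0" using Na by (simp add: Xp)
    have X0: "X n > 0" using rho by (simp add: X_def)
    have E1: "w * X n > 2 * c0 + 2"
    proof -
      have "(2 * c0 + 2) / w < X n" using XE by (simp add: E0_def)
      then show ?thesis using w by (simp add: field_simps)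
    qed
    have E2: "w * X n * (rho^2 - 1) > 2 * c0 + 1"
    proof -
      have "(2 * c0 + 1) / (w * (rho^2 - 1)) < X n" using XE by (simp add: E0_def)
      then show ?thesis using w r2 by (simp add: field_simps)
    qed
    have c1: "\<bar>tt n - w * X n\<bar> \<le> c0" using close by (simp add: X_def)
    have c2: "\<bar>tt (Suc n) - w * X (Suc n)\<bar> \<le> c0" unfolding X_def by (rule close)
    have XS: "X (Suc n) = rho^2 * X n" by (simp add: Xp)
    have t2: "2 \<le> tt n" using c1 E1 c0 by linarith
    have tle: "tt n \<le> 2 * w * X n" using c1 E1 c0 by linarith
    have inc: "tt n < tt (Suc n)"
    proof -
      have "w * X (Suc n) - w * X n = w * X n * (rho^2 - 1)" unfolding XS by (simp add: algebra_simps)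
      then show ?thesis using c1 c2 E2 by linarith
    qed
    have sq: "sqrt (tt n) \<le> sqrt (2 * w) * rho ^ n"
    proof -
      have "sqrt (tt n) \<le> sqrt (2 * w * X n)" using tle by simp
      also have "\<dots> = sqrt (2 * w) * rho ^ n" using rho by (simp add: X_def real_sqrt_mult)
      finally show ?thesis .
    qed
    have lnb: "ln (tt n) \<le> 3 * real n * ln rho"
    proof -
      have "ln (tt n) \<le> ln (2 * w * X n)" using tle t2 by simp
      also have "\<dots> = ln (2 * w) + 2 * real n * ln rho" using w rho
        by (simp add: X_def ln_mult ln_realpow)
      also have "ln (2 * w) \<le> real n * ln rho"
      proof -
        have "ln (2 * w) / ln rho \<le> real Nb" unfolding Nb_def by linarith
        also have "\<dots> \<le> real n" using n by simp
        finally show ?thesis using lnr by (simp add: divide_le_eq)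
      qed
      finally show ?thesis by simp
    qed
    show "2 \<le> tt n \<and> tt n < tt (Suc n) \<and> sqrt (tt n) \<le> sqrt (2 * w) * rho ^ n \<and> ln (tt n) \<le> 3 * real n * ln rho"
      using t2 inc sq lnb by simp
  qed
qed


lemma div_bound:
  fixes M D U :: real
  assumes "M > 0" "D > 0" "D \<le> U" "x < M / U"
  shows "x < M / D"
proof -
  have "M / U \<le> M / D" using assms by (intro divide_left_mono) auto
  then show ?thesis using assms(4) by simp
qed

lemma assemble:
  fixes tt :: "nat \<Rightarrow> real" and G :: "nat set"
  assumes rho: "rho > 1" and w: "w > 0" and c0: "c0 \<ge> 0"
    and close: "\<And>n. \<bar>tt n - w * (rho ^ n)^2\<bar> \<le> c0"
    and tint: "\<And>n. tt n \<in> \<int>"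
    and ea: "\<And>n. \<exists>k\<in>\<int>. \<bar>tt n * a - k\<bar> \<le> Ca / rho ^ n"
    and eb: "\<And>n. \<exists>k\<in>\<int>. \<bar>tt n * bb - k\<bar> \<le> Cb / rho ^ n"
    and eG: "\<And>n. n \<in> G \<Longrightarrow> \<exists>k\<in>\<int>. \<bar>tt n * a - k\<bar> \<le> C3 / (real n * rho ^ n)"
    and Ginf: "infinite G" and G1: "\<And>n. n \<in> G \<Longrightarrow> n \<ge> 1"
    and C: "Ca \<ge> 0" "Cb \<ge> 0" "C3 \<ge> 0"
  shows "\<exists>s. peck_sequence s a bb"
proof -
  obtain N0 where N0: "\<And>n. n \<ge> N0 \<Longrightarrow> 2 \<le> tt n \<and> tt n < tt (Suc n) \<and> sqrt (tt n) \<le> sqrt (2 * w) * rho ^ n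
            \<and> ln (tt n) \<le> 3 * real n * ln rho"
    using tail_facts[OF rho w c0 close] by blast
  define s where "s k = nat \<lfloor>tt (N0 + k)\<rfloor>" for k
  have sr: "real (s k) = tt (N0 + k)" for k
  proof -
    obtain j where j: "tt (N0 + k) = of_int j" using tint Ints_cases by blast
    have "2 \<le> tt (N0 + k)" using N0[of "N0 + k"] by simp
    then have "j \<ge> 0" using j by simp
    then show ?thesis unfolding s_def j by simp
  qed
  have s2: "real (s k) \<ge> 2" for k using N0[of "N0 + k"] sr by simp
  have smono: "strict_mono s"
  proof (rule strict_mono_Suc_iff[THEN iffD2], intro allI)
    fix k
    have "tt (N0 + k) < tt (Suc (N0 + k))" using N0[of "N0 + k"] by simp
    then have "real (s k) < real (s (Suc k))" using sr[of k] sr[of "Suc k"] by simp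
    then show "s k < s (Suc k)" by simp
  qed
  have spos: "s k > 0" for k using s2[of k] by simp
  define I where "I = {k. N0 + k \<in> G}"
  have Iinf: "infinite I"
  proof
    assume "finite I"
    have "G \<subseteq> {..<N0} \<union> (\<lambda>k. N0 + k) ` I"
    proof
      fix n assume "n \<in> G"
      show "n \<in> {..<N0} \<union> (\<lambda>k. N0 + k) ` I"
      proof (cases "n < N0")
        case False
        then have "n = N0 + (n - N0)" "n - N0 \<in> I" using \<open>n \<in> G\<close> by (auto simp: I_def)
        then show ?thesis by blast
      qed simp
    qed
    moreover have "finite ({..<N0} \<union> (\<lambda>k. N0 + k) ` I)" using \<open>finite I\<close> by simp
    ultimately show False using Ginf finite_subset by blast
  qed
  define r where "r = enumerate I"
  have rmono: "strict_mono r" unfolding r_def strict_mono_def using enumerate_mono[OF _ Iinf] by blast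
  have rI: "r n \<in> I" for n unfolding r_def by (rule enumerate_in_set[OF Iinf])
  define M1 where "M1 = sqrt (2 * w) * (Ca + Cb + 1)"
  define M2 where "M2 = 3 * sqrt (2 * w) * ln rho * (C3 + 1)"
  have sw: "sqrt (2 * w) > 0" using w by simp
  have lnr: "ln rho > 0" using rho by simp
  have rp: "rho ^ n > 0" for n using rho by simp
  have M1p: "M1 > 0" using C sw by (simp add: M1_def)
  have M2p: "M2 > 0" using C sw lnr by (simp add: M2_def)
  have B1: "dist_int (tt m * g) < M1 / sqrt (tt m)" if m: "m \<ge> N0"
     and eg: "\<exists>k\<in>\<int>. \<bar>tt m * g - k\<bar> \<le> Cg / rho ^ m" and Cg: "0 \<le> Cg" "Cg \<le> Ca + Cb" for m g Cg
  proof -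
    obtain k where k: "k \<in> \<int>" "\<bar>tt m * g - k\<bar> \<le> Cg / rho ^ m" using eg by blast
    have "dist_int (tt m * g) \<le> Cg / rho ^ m" using dist_int_le[OF k(1), of "tt m * _"] k(2) by (meson order_trans)
    also have "\<dots> < (Ca + Cb + 1) / rho ^ m" using Cg rp[of m] by (intro divide_strict_right_mono) auto
    also have "\<dots> = M1 / (sqrt (2 * w) * rho ^ m)" using sw by (simp add: M1_def)
    finally have "dist_int (tt m * g) < M1 / (sqrt (2 * w) * rho ^ m)" .
    moreover have "sqrt (tt m) > 0" "sqrt (tt m) \<le> sqrt (2 * w) * rho ^ m" using N0[OF m] by auto
    ultimately show ?thesis using div_bound[OF M1p] by blast
  qed
  have B2: "dist_int (tt m * a) < M2 / (sqrt (tt m) * ln (tt m))" if m: "m \<ge> N0" "m \<in> G" for m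
  proof -
    obtain k where k: "k \<in> \<int>" "\<bar>tt m * a - k\<bar> \<le> C3 / (real m * rho ^ m)" using eG[OF m(2)] by blast
    have m1: "real m \<ge> 1" using G1[OF m(2)] by simp
    have den: "real m * rho ^ m > 0" using m1 rp[of m] by simp
    have "dist_int (tt m * a) \<le> C3 / (real m * rho ^ m)" using dist_int_le[OF k(1), of "tt m * _"] k(2) by (meson order_trans)
    also have "\<dots> < (C3 + 1) / (real m * rho ^ m)" using den by (intro divide_strict_right_mono) auto
    also have "\<dots> = M2 / ((sqrt (2 * w) * rho ^ m) * (3 * real m * ln rho))"
    proof -
      define K' where "K' = 3 * sqrt (2 * w) * ln rho"
      have K'0: "K' \<noteq> 0" using sw lnr by (simp add: K'_def)
      have e1: "(sqrt (2 * w) * rho ^ m) * (3 * real m * ln rho) = K' * (real m * rho ^ m)"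
        by (simp add: K'_def algebra_simps)
      have e2: "M2 = K' * (C3 + 1)" by (simp add: M2_def K'_def)
      show ?thesis unfolding e1 e2 using K'0 by (rule mult_divide_mult_cancel_left[symmetric])
    qed
    finally have lt: "dist_int (tt m * a) < M2 / ((sqrt (2 * w) * rho ^ m) * (3 * real m * ln rho))" .
    have f: "2 \<le> tt m" "sqrt (tt m) \<le> sqrt (2 * w) * rho ^ m" "ln (tt m) \<le> 3 * real m * ln rho"
      using N0[OF m(1)] by auto
    have lp: "ln (tt m) > 0" using f(1) by simp
    have sp: "sqrt (tt m) > 0" using f(1) by simp
    have "sqrt (tt m) * ln (tt m) \<le> (sqrt (2 * w) * rho ^ m) * (3 * real m * ln rho)"
      using f lp sp sw rp[of m] by (intro mult_mono) auto
    moreover have "sqrt (tt m) * ln (tt m) > 0" using lp sp by simp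
    ultimately show ?thesis using div_bound[OF M2p _ _ lt] by blast
  qed
  have P1: "\<forall>n. 2 \<le> s (r n)" using s2 by (simp add: of_nat_le_iff[symmetric])
  have P2: "\<forall>n. max (dist_int (real (s n) * a)) (dist_int (real (s n) * bb)) < M1 / sqrt (real (s n))"
    unfolding sr using B1[of "N0 + _" a Ca, OF _ ea] B1[of "N0 + _" bb Cb, OF _ eb] C by simp
  have P3: "\<forall>n. dist_int (real (s (r n)) * a) < M2 / (sqrt (real (s (r n))) * ln (real (s (r n))))"
    unfolding sr using B2[of "N0 + r _"] rI by (simp add: I_def)
  have P0: "\<forall>n. s n > 0" using spos by blast
  show ?thesis unfolding peck_sequence_def using smono P0 M1p M2p rmono P1 P2 P3 by blast
qed

context cubicG
begin

lemma main:
  assumes aK: "a \<in> K" and bK': "bb \<in> K"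
  shows "\<exists>s. peck_sequence s a bb"
proof -
  obtain e where e: "inO e" "e > 1" "nm e = 1" using unit_exists by blast
  have eK: "e \<in> K" using inO_K[OF e(1)] .
  define lam where "lam = sg e"
  define rho where "rho = sqrt e"
  have rho1: "rho > 1" using e(2) by (simp add: rho_def)
  have e_rho: "e = rho^2" using e(2) by (simp add: rho_def)
  have cl: "cmod lam * rho = 1"
  proof -
    have "e * (cmod lam)^2 = 1" using e(3) by (simp add: nm_def lam_def)
    then have "(cmod lam * rho)^2 = 1" unfolding e_rho by (simp add: power_mult_distrib mult.commute)
    then show ?thesis using rho1 by (simp add: power2_eq_1_iff) (smt (verit) norm_ge_zero zero_le_mult_iff)
  qed
  have clp: "cmod lam ^ n = 1 / rho ^ n" for n
  proof -
    have "cmod lam ^ n * rho ^ n = 1" using cl by (simp add: power_mult_distrib[symmetric])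
    then show ?thesis using rho1 by (simp add: field_simps)
  qed
  have cl1: "cmod lam ^ n \<le> 1" for n
  proof -
    have "1 \<le> rho ^ n" using rho1 by (simp add: one_le_power)
    then show ?thesis unfolding clp by simp
  qed
  obtain w0 C2 where w0: "w0 \<in> K" "w0 \<noteq> 0" "C2 \<ge> 0"
      "\<And>z. \<bar>Re (z * (sg w0 * (of_real a - sg a)))\<bar> \<le> C2 * \<bar>Im z\<bar>"
    using omega_choice[OF aK] by blast
  obtain d1 where d1: "d1 > 0" "inO (of_int d1 * w0)" using exists_den[OF w0(1)] by blast
  obtain d2 where d2: "d2 > 0" "inO (of_int d2 * (w0 * a))" using exists_den[OF K_mult[OF w0(1) aK]] by blast
  obtain d3 where d3: "d3 > 0" "inO (of_int d3 * (w0 * bb))" using exists_den[OF K_mult[OF w0(1) bK']] by blast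
  define D where "D = d1 * d2 * d3"
  have D0: "D > 0" using d1 d2 d3 by (simp add: D_def)
  define sn :: int where "sn = (if of_int D * w0 > 0 then 1 else -1)"
  define w where "w = of_int (sn * D) * w0"
  have wpos: "w > 0"
  proof (cases "of_int D * w0 > 0")
    case True then show ?thesis by (simp add: w_def sn_def)
  next
    case False
    have "of_int D * w0 \<noteq> 0" using D0 w0(2) by simp
    then have "of_int D * w0 < 0" using False by linarith
    then show ?thesis using False by (simp add: w_def sn_def)
  qed
  have wO: "inO w"
  proof -
    have "w = of_int (sn * d2 * d3) * (of_int d1 * w0)" by (simp add: w_def D_def algebra_simps)
    then show ?thesis by (simp only:) (rule inO_int_mult[OF d1(2)])
  qed
  have waO: "inO (w * a)"
  proof -
    have "w * a = of_int (sn * d1 * d3) * (of_int d2 * (w0 * a))" by (simp add: w_def D_def algebra_simps)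
    then show ?thesis by (simp only:) (rule inO_int_mult[OF d2(2)])
  qed
  have wbO: "inO (w * bb)"
  proof -
    have "w * bb = of_int (sn * d1 * d2) * (of_int d3 * (w0 * bb))" by (simp add: w_def D_def algebra_simps)
    then show ?thesis by (simp only:) (rule inO_int_mult[OF d3(2)])
  qed
  have wK: "w \<in> K" using inO_K[OF wO] .
  have sgw: "sg w = of_int (sn * D) * sg w0"
    unfolding w_def using sg_mult[OF K_rat[of "of_int (sn * D)"] w0(1)] sg_rat[of "of_int (sn * D)"] by simp
  define tt where "tt n = tr (e ^ n * w)" for n
  have enK: "e ^ n * w \<in> K" for n using K_mult[OF K_power[OF eK] wK] .
  have sg_en: "sg (e ^ n * w) = lam ^ n * sg w" for n
    using sg_mult[OF K_power[OF eK] wK] sg_power[OF eK] by (simp add: lam_def)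
  have tint: "tt n \<in> \<int>" for n unfolding tt_def by (rule tr_int[OF inO_mult[OF inO_power[OF e(1)] wO]])
  define c0 where "c0 = 2 * cmod (sg w)"
  have close: "\<bar>tt n - w * (rho ^ n)^2\<bar> \<le> c0" for n
  proof -
    have "e ^ n = (rho ^ n)^2" unfolding e_rho by (simp add: power_mult[symmetric] mult.commute)
    then have "tt n - w * (rho ^ n)^2 = 2 * Re (sg (e ^ n * w))" by (simp add: tt_def tr_def)
    also have "\<bar>\<dots>\<bar> \<le> 2 * cmod (sg (e ^ n * w))" using abs_Re_le_cmod[of "sg (e ^ n * w)"] by (simp add: abs_mult)
    also have "\<dots> = 2 * (cmod lam ^ n * cmod (sg w))" by (simp add: sg_en norm_mult norm_power)
    also have "\<dots> \<le> 2 * (1 * cmod (sg w))" using cl1[of n] by (intro mult_left_mono mult_right_mono) auto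
    finally show ?thesis by (simp add: c0_def)
  qed
  have err: "tt n * g - tr (e ^ n * w * g) = 2 * Re (lam ^ n * sg w * (of_real g - sg g))" if gK: "g \<in> K" for n g
    unfolding tt_def using tr_err[OF enK gK] by (simp add: sg_en)
  have eg: "\<exists>k\<in>\<int>. \<bar>tt n * g - k\<bar> \<le> (2 * cmod (sg w) * cmod (of_real g - sg g)) / rho ^ n"
    if gK: "g \<in> K" and wgO: "inO (w * g)" for n g
  proof (intro bexI)
    show "tr (e ^ n * w * g) \<in> \<int>" using tr_int[OF inO_mult[OF inO_power[OF e(1)] wgO]] by (simp add: mult.assoc)
    have "\<bar>tt n * g - tr (e ^ n * w * g)\<bar> \<le> 2 * cmod (lam ^ n * sg w * (of_real g - sg g))"
      unfolding err[OF gK] using abs_Re_le_cmod[of "lam ^ n * sg w * (of_real g - sg g)"] by (simp add: abs_mult)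
    also have "\<dots> = (2 * cmod (sg w) * cmod (of_real g - sg g)) * cmod lam ^ n" by (simp add: norm_mult norm_power)
    also have "\<dots> = (2 * cmod (sg w) * cmod (of_real g - sg g)) / rho ^ n" by (simp add: clp)
    finally show "\<bar>tt n * g - tr (e ^ n * w * g)\<bar> \<le> (2 * cmod (sg w) * cmod (of_real g - sg g)) / rho ^ n" .
  qed
  define G where "G = {n::nat. 1 \<le> n \<and> \<bar>Im (lam ^ n)\<bar> \<le> 2 * pi * cmod lam ^ n / n}"
  have Ginf: "infinite G" unfolding G_def by (rule dir_infinite)
  define C3 where "C3 = 4 * pi * \<bar>of_int (sn * D)\<bar> * C2"
  have eG: "\<exists>k\<in>\<int>. \<bar>tt n * a - k\<bar> \<le> C3 / (real n * rho ^ n)" if nG: "n \<in> G" for n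
  proof (intro bexI)
    show "tr (e ^ n * w * a) \<in> \<int>" using tr_int[OF inO_mult[OF inO_power[OF e(1)] waO]] by (simp add: mult.assoc)
    have n1: "real n \<ge> 1" and im: "\<bar>Im (lam ^ n)\<bar> \<le> 2 * pi * cmod lam ^ n / n" using nG by (auto simp: G_def)
    have "tt n * a - tr (e ^ n * w * a) = 2 * of_int (sn * D) * Re (lam ^ n * (sg w0 * (of_real a - sg a)))"
      unfolding err[OF aK] sgw by (simp add: algebra_simps)
    then have "\<bar>tt n * a - tr (e ^ n * w * a)\<bar> = 2 * \<bar>of_int (sn * D)\<bar> * \<bar>Re (lam ^ n * (sg w0 * (of_real a - sg a)))\<bar>"
      by (simp add: abs_mult)
    also have "\<dots> \<le> 2 * \<bar>of_int (sn * D)\<bar> * (C2 * \<bar>Im (lam ^ n)\<bar>)" using w0(4) by (intro mult_left_mono) auto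
    also have "\<dots> \<le> 2 * \<bar>of_int (sn * D)\<bar> * (C2 * (2 * pi * cmod lam ^ n / n))"
      using im w0(3) by (intro mult_left_mono) auto
    also have "\<dots> = C3 / (real n * rho ^ n)" using n1 rho1 by (simp add: C3_def clp field_simps)
    finally show "\<bar>tt n * a - tr (e ^ n * w * a)\<bar> \<le> C3 / (real n * rho ^ n)" .
  qed
  show ?thesis
  proof (rule assemble[OF rho1 wpos _ close tint])
    show "0 \<le> c0" by (simp add: c0_def)
    show "\<exists>k\<in>\<int>. \<bar>tt n * a - k\<bar> \<le> (2 * cmod (sg w) * cmod (of_real a - sg a)) / rho ^ n" for n by (rule eg[OF aK waO])
    show "\<exists>k\<in>\<int>. \<bar>tt n * bb - k\<bar> \<le> (2 * cmod (sg w) * cmod (of_real bb - sg bb)) / rho ^ n" for n by (rule eg[OF bK' wbO])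
    show "\<exists>k\<in>\<int>. \<bar>tt n * a - k\<bar> \<le> C3 / (real n * rho ^ n)" if "n \<in> G" for n using eG that .
    show "infinite G" by (rule Ginf)
    show "n \<in> G \<Longrightarrow> 1 \<le> n" for n by (simp add: G_def)
    show "0 \<le> 2 * cmod (sg w) * cmod (of_real a - sg a)" by simp
    show "0 \<le> 2 * cmod (sg w) * cmod (of_real bb - sg bb)" by simp
    show "0 \<le> C3" using w0(3) by (simp add: C3_def)
  qed
qed

end

theorem theorem3:
  fixes K :: "real set" and \<alpha> \<beta> :: real
  assumes "cubic_number_field K"
    and "card (real_embeddings K) = 1"
    and "\<alpha> \<in> K" and "\<beta> \<in> K"
  shows "\<exists>s. peck_sequence s \<alpha> \<beta>"
proof -
  obtain b :: "nat \<Rightarrow> real" where b: "real_subfield K" "\<forall>i<3. b i \<in> K"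
    "\<forall>q. (\<forall>i<3. q i \<in> \<rat>) \<and> (\<Sum>i<3. q i * b i) = 0 \<longrightarrow> (\<forall>i<3. q i = 0)"
    "\<forall>x\<in>K. \<exists>q. (\<forall>i<3. q i \<in> \<rat>) \<and> x = (\<Sum>i<3. q i * b i)"
    using assms(1) unfolding cubic_number_field_def by blast
  interpret cubicK K b
    by unfold_locales (use b in blast)+
  obtain t A B C where t: "t \<in> K" "t \<notin> \<rat>" "t^3 = of_int A * t^2 + of_int B * t + of_int C"
    using exists_int_gen by blast
  interpret cubicG K b t A B C
    by unfold_locales (use t assms(2) in auto)
  show ?thesis by (rule main[OF assms(3,4)])
qed

end
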